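(* Let $m\ge 1$ and $n\ge 0$ be integers. The multiplicity of $-\binom{m}{2}$ as an eigenvalue of ${\rm SR}(m,n)$ is precisely $\binom{n-\binom{m-1}{2}}{m-1}$.
   Context: ${\rm SR}(m,n)$ is the graph whose vertices are the vectors in $\{0,1,2,\dots\}^m$ with coordinate sum $n$, two vertices being adjacent when they differ in precisely two coordinate positions; eigenvalues are those of the adjacency matrix, and the multiplicity of a number that is not an eigenvalue is $0$. The binomial coefficient $\binom{a}{b}$ (for integers $a$ and $b\ge 0$) is taken to be $0$ when $a<b$, including negative $a$; equivalently, $\binom{n-\binom{m-1}{2}}{m-1}$ is the number of vectors in $\{0,1,2,\dots\}^m$ with coordinate sum $n-\binom{m}{2}$. *)

theory Defs
  imports "Jordan_Normal_Form.Char_Poly" "HOL-Library.List_Lexorder"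
begin

definition SR_vertices :: "nat \<Rightarrow> nat \<Rightarrow> nat list set" where
  "SR_vertices m n = {v. length v = m \<and> sum_list v = n}"

definition SR_adj :: "nat list \<Rightarrow> nat list \<Rightarrow> bool" where
  "SR_adj u v = (card {i. i < length u \<and> u ! i \<noteq> v ! i} = 2)"

text \<open>A fixed enumeration of the (finite) vertex set; eigenvalue multiplicities do not depend on it.\<close>
definition SR_vlist :: "nat \<Rightarrow> nat \<Rightarrow> nat list list" where
  "SR_vlist m n = sorted_list_of_set (SR_vertices m n)"

definition SR_adj_matrix :: "nat \<Rightarrow> nat \<Rightarrow> real mat" where
  "SR_adj_matrix m n = (let vs = SR_vlist m n in
     mat (length vs) (length vs) (\<lambda>(i, j). if SR_adj (vs ! i) (vs ! j) then 1 else 0))"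

text \<open>Multiplicity of x as an eigenvalue: multiplicity as a root of the characteristic
  polynomial (0 if x is not an eigenvalue).\<close>
definition eig_mult :: "real mat \<Rightarrow> real \<Rightarrow> nat" where
  "eig_mult A x = order x (char_poly A)"

end

theory Submission
  imports Defs "Jordan_Normal_Form.Jordan_Normal_Form_Existence" "Jordan_Normal_Form.Jordan_Normal_Form_Uniqueness"
begin

lemma herm_ker2:
  fixes M :: "complex mat"
  assumes M: "M \<in> carrier_mat N N"
    and herm: "\<And>i j. i < N \<Longrightarrow> j < N \<Longrightarrow> M $$ (i,j) = cnj (M $$ (j,i))"
    and x: "x \<in> carrier_vec N" and z: "M *\<^sub>v (M *\<^sub>v x) = 0\<^sub>v N"
  shows "M *\<^sub>v x = 0\<^sub>v N"
proof -
  define y where "y = M *\<^sub>v x"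
  have y: "y \<in> carrier_vec N" using M x y_def by auto
  have yi: "y $ i = (\<Sum>j<N. M $$ (i,j) * x $ j)" if "i < N" for i
    using that M x unfolding y_def by (auto simp: scalar_prod_def atLeast0LessThan)
  have My: "(\<Sum>i<N. M $$ (j,i) * y $ i) = 0" if "j < N" for j
  proof -
    have "(M *\<^sub>v y) $ j = 0" using z that M unfolding y_def by simp
    thus ?thesis using that M y by (auto simp: scalar_prod_def atLeast0LessThan)
  qed
  have "(\<Sum>i<N. cnj (y $ i) * y $ i) = (\<Sum>i<N. \<Sum>j<N. cnj (M $$ (i,j)) * cnj (x $ j) * y $ i)"
    by (rule sum.cong, simp, simp add: yi sum_distrib_right)
  also have "\<dots> = (\<Sum>j<N. \<Sum>i<N. cnj (M $$ (i,j)) * cnj (x $ j) * y $ i)"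
    by (rule sum.swap)
  also have "\<dots> = (\<Sum>j<N. cnj (x $ j) * (\<Sum>i<N. M $$ (j,i) * y $ i))"
  proof (rule sum.cong[OF refl])
    fix j assume j: "j \<in> {..<N}"
    have "cnj (M $$ (i,j)) = M $$ (j,i)" if "i \<in> {..<N}" for i
      using herm[of j i] that j by simp
    thus "(\<Sum>i<N. cnj (M $$ (i,j)) * cnj (x $ j) * y $ i) = cnj (x $ j) * (\<Sum>i<N. M $$ (j,i) * y $ i)"
      by (simp add: sum_distrib_left mult.assoc mult.left_commute)
  qed
  also have "\<dots> = 0" by (simp add: My)
  finally have S: "(\<Sum>i<N. cnj (y $ i) * y $ i) = 0" .
  have "(\<Sum>i<N. cnj (y $ i) * y $ i) = complex_of_real (\<Sum>i<N. (cmod (y $ i))^2)"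
  proof -
    have "(\<Sum>i<N. cnj (y $ i) * y $ i) = (\<Sum>i<N. complex_of_real ((cmod (y $ i))^2))"
      by (intro sum.cong refl, subst complex_norm_square, simp add: mult.commute)
    thus ?thesis by (simp add: of_real_sum)
  qed
  with S have S2: "(\<Sum>i<N. (cmod (y $ i))^2) = 0" by (metis of_real_eq_0_iff)
  have "\<forall>i\<in>{..<N}. (cmod (y $ i))^2 = 0"
    using sum_nonneg_eq_0_iff[of "{..<N}" "\<lambda>i. (cmod (y $ i))^2"] S2 by auto
  hence "y = 0\<^sub>v N" using y by (auto intro!: eq_vecI)
  thus ?thesis unfolding y_def .
qed

lemma kernel_dim_cong:
  assumes "mat_kernel A = mat_kernel B" "dim_col A = dim_col B"
  shows "kernel_dim A = kernel_dim B"
  using assms unfolding kernel_dim_def by simp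

interpretation rc_hom: map_poly_inj_idom_divide_hom complex_of_real ..

lemma order_real_complex:
  fixes p :: "real poly"
  shows "Polynomial.order (complex_of_real x) (map_poly complex_of_real p) = Polynomial.order x p"
  by (rule rc_hom.order_hom)

lemma pow_mat_carrier_Suc: "M \<in> carrier_mat N N \<Longrightarrow> M ^\<^sub>m k \<in> carrier_mat N N"
  by (induction k) auto

lemma order_eq_kernel_dim:
  fixes A :: "real mat"
  assumes A: "A \<in> carrier_mat N N" and sym: "\<And>i j. i < N \<Longrightarrow> j < N \<Longrightarrow> A $$ (i,j) = A $$ (j,i)"
  shows "Polynomial.order x (char_poly A) =
    kernel_dim (char_matrix (map_mat complex_of_real A) (complex_of_real x))"
proof -
  define C where "C = map_mat complex_of_real A"
  have C: "C \<in> carrier_mat N N" using A by (simp add: C_def)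
  define ev where "ev = complex_of_real x"
  define M where "M = char_matrix C ev"
  have M: "M \<in> carrier_mat N N" using C by (simp add: M_def)
  have herm: "M $$ (i,j) = cnj (M $$ (j,i))" if "i < N" "j < N" for i j
    using A C sym[OF that] that by (auto simp: M_def C_def char_matrix_def ev_def)
  have ker2: "M *\<^sub>v v = 0\<^sub>v N" if "M *\<^sub>v (M *\<^sub>v v) = 0\<^sub>v N" "v \<in> carrier_vec N" for v
    by (rule herm_ker2[OF M herm that(2) that(1)])
  have kerk: "M *\<^sub>v v = 0\<^sub>v N" if "v \<in> carrier_vec N" "(M ^\<^sub>m Suc k) *\<^sub>v v = 0\<^sub>v N" for k v
    using that
  proof (induction k arbitrary: v)
    case 0 then show ?case using M by simp
  next
    case (Suc k)
    have Mk: "M ^\<^sub>m Suc k \<in> carrier_mat N N" using M by (rule pow_mat_carrier_Suc)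
    have "(M ^\<^sub>m Suc k) *\<^sub>v (M *\<^sub>v v) = (M ^\<^sub>m Suc (Suc k)) *\<^sub>v v"
      using Mk M Suc.prems by (simp add: assoc_mult_mat_vec)
    also have "\<dots> = 0\<^sub>v N" using Suc.prems by simp
    finally have "M *\<^sub>v (M *\<^sub>v v) = 0\<^sub>v N" using Suc.IH[of "M *\<^sub>v v"] M Suc.prems by auto
    thus ?case using ker2 Suc.prems by auto
  qed
  have kereq: "mat_kernel (M ^\<^sub>m Suc k) = mat_kernel M" for k
  proof -
    have Mk: "M ^\<^sub>m k \<in> carrier_mat N N" using M by (rule pow_mat_carrier_Suc)
    have "(M ^\<^sub>m Suc k) *\<^sub>v v = 0\<^sub>v N" if "v \<in> carrier_vec N" "M *\<^sub>v v = 0\<^sub>v N" for v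
    proof -
      have "(M ^\<^sub>m Suc k) *\<^sub>v v = (M ^\<^sub>m k) *\<^sub>v (M *\<^sub>v v)"
        using Mk M that by (simp only: pow_mat.simps, subst assoc_mult_mat_vec, auto)
      moreover have "(M ^\<^sub>m k) *\<^sub>v 0\<^sub>v N = 0\<^sub>v N"
        using Mk by (intro eq_vecI, auto simp: index_mult_mat_vec scalar_prod_def)
      ultimately show ?thesis using that by simp
    qed
    moreover have "M ^\<^sub>m Suc k \<in> carrier_mat N N" using M by (rule pow_mat_carrier_Suc)
    ultimately show ?thesis using kerk M unfolding mat_kernel_def by auto
  qed
  have cp: "char_poly C = map_poly complex_of_real (char_poly A)"
    unfolding C_def by (rule of_real_hom.char_poly_hom[OF A])
  have o1: "Polynomial.order x (char_poly A) = Polynomial.order ev (char_poly C)"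
    using cp order_real_complex ev_def by simp
  obtain as where "char_poly C = (\<Prod>a\<leftarrow>as. [:- a, 1:])" using char_poly_factorized[OF C] by auto
  then obtain n_as where jnf: "jordan_nf C n_as" using jordan_nf_exists[OF C] by blast
  define k where "k = Polynomial.order ev (char_poly C)"
  have bound: "n \<le> k" if "(n, ev) \<in> set n_as" for n
    using jordan_nf_block_size_order_bound[OF jnf that] k_def by simp
  have "dim_gen_eigenspace C ev (Suc k) = (\<Sum>n\<leftarrow>map fst [(n, e)\<leftarrow>n_as . e = ev]. min (Suc k) n)"
    by (rule dim_gen_eigenspace[OF jnf])
  also have "\<dots> = (\<Sum>n\<leftarrow>map fst [(n, e)\<leftarrow>n_as . e = ev]. n)"
  proof -
    have gen: "(\<Sum>n\<leftarrow>xs. min (Suc k) n) = (\<Sum>n\<leftarrow>xs. n)" if "\<forall>x\<in>set xs. x \<le> k" for xs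
      using that by (induction xs) auto
    show ?thesis by (rule gen, auto dest: bound)
  qed
  also have "\<dots> = k" unfolding k_def jordan_nf_order[OF jnf, of ev]
    by (simp add: case_prod_beta')
  finally have "dim_gen_eigenspace C ev (Suc k) = k" .
  moreover have "dim_gen_eigenspace C ev (Suc k) = kernel_dim M"
    unfolding dim_gen_eigenspace_def M_def[symmetric]
    by (rule kernel_dim_cong[OF kereq], insert M pow_mat_carrier_Suc[OF M, of "Suc k"], auto)
  ultimately show ?thesis using o1 k_def M_def C_def ev_def by simp
qed

definition sh :: "nat \<Rightarrow> (nat list \<Rightarrow> 'a::comm_ring_1) \<Rightarrow> nat list \<Rightarrow> 'a" where
  "sh i g v = (if i < length v \<and> 0 < v ! i then g (v[i := v ! i - 1]) else 0)"

definition Dp :: "nat \<Rightarrow> nat \<Rightarrow> (nat list \<Rightarrow> 'a::comm_ring_1) \<Rightarrow> nat list \<Rightarrow> 'a" where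
  "Dp i j g v = sh i g v - sh j g v"

fun Er :: "nat \<Rightarrow> nat \<Rightarrow> (nat list \<Rightarrow> 'a::comm_ring_1) \<Rightarrow> nat list \<Rightarrow> 'a" where
  "Er m 0 g = g"
| "Er m (Suc k) g = Dp k m (Er m k g)"

fun Phi :: "nat \<Rightarrow> (nat list \<Rightarrow> 'a::comm_ring_1) \<Rightarrow> nat list \<Rightarrow> 'a" where
  "Phi 0 g = g"
| "Phi (Suc m) g = Phi m (Er m m g)"

lemma sh_comm: "sh i (sh j g) = sh j (sh i g)"
proof (rule ext)
  fix v :: "nat list"
  show "sh i (sh j g) v = sh j (sh i g) v"
  proof (cases "i = j")
    case False
    then show ?thesis unfolding sh_def by (auto simp: nth_list_update list_update_swap)
  qed simp
qed

definition linop :: "((nat list \<Rightarrow> 'a::comm_ring_1) \<Rightarrow> nat list \<Rightarrow> 'a) \<Rightarrow> bool" where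
  "linop T \<longleftrightarrow> (\<forall>f g. T (\<lambda>v. f v + g v) = (\<lambda>v. T f v + T g v)) \<and> (\<forall>c f. T (\<lambda>v. c * f v) = (\<lambda>v. c * T f v))"

lemma linop_sh: "linop (sh i)"
  unfolding linop_def sh_def by (auto intro!: ext)


lemma linop_add: "linop T \<Longrightarrow> T (\<lambda>v. f v + g v) = (\<lambda>v. T f v + T g v)"
  unfolding linop_def by blast

lemma linop_scale: "linop T \<Longrightarrow> T (\<lambda>v. c * f v) = (\<lambda>v. c * T f v)"
  unfolding linop_def by blast

lemma linop_zero: "linop T \<Longrightarrow> T (\<lambda>v. 0) = (\<lambda>v. 0)"
  using linop_scale[of T 0 "\<lambda>v. 0"] by simp

lemma linop_minus: "linop T \<Longrightarrow> T (\<lambda>v. f v - g v) = (\<lambda>v. T f v - T g v)"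
proof -
  assume L: "linop T"
  have e1: "(\<lambda>v. f v - g v) = (\<lambda>v. f v + (-1) * g v)" by simp
  have e2: "T (\<lambda>v. f v + (-1) * g v) = (\<lambda>v. T f v + T (\<lambda>v. (-1) * g v) v)"
    by (rule linop_add[OF L, of f "\<lambda>v. (-1) * g v"])
  have e3: "T (\<lambda>v. (-1) * g v) = (\<lambda>v. (-1) * T g v)"
    by (rule linop_scale[OF L])
  show ?thesis unfolding e1 e2 e3 by simp
qed


lemma linop_sum: assumes "linop T" "finite W"
  shows "T (\<lambda>v. \<Sum>w\<in>W. F w v) = (\<lambda>v. \<Sum>w\<in>W. T (F w) v)"
  using assms(2)
proof (induction W rule: finite_induct)
  case empty then show ?case using linop_zero[OF assms(1)] by simp
next
  case (insert x W)
  then show ?case using linop_add[OF assms(1), of "F x" "\<lambda>v. \<Sum>w\<in>W. F w v"] by simp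
qed

lemma linop_comp: "linop S \<Longrightarrow> linop T \<Longrightarrow> linop (\<lambda>g. S (T g))"
  unfolding linop_def by simp

lemma linop_diff: "linop S \<Longrightarrow> linop T \<Longrightarrow> linop (\<lambda>g v. S g v - T g v)"
  unfolding linop_def by (simp add: algebra_simps)

lemma linop_Dp: "linop (Dp i j)"
  using linop_diff[OF linop_sh[of i] linop_sh[of j]] unfolding Dp_def[abs_def] by simp

lemma linop_Er: "linop (Er m k)"
proof (induction k)
  case 0 then show ?case by (simp add: linop_def)
next
  case (Suc k)
  have "Er m (Suc k) = (\<lambda>g. Dp k m (Er m k g))" by (rule ext, simp)
  then show ?case using linop_comp[OF linop_Dp Suc] by simp
qed

lemma linop_Phi: "linop (Phi m)"
proof (induction m)
  case 0 then show ?case by (simp add: linop_def)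
next
  case (Suc m)
  have "Phi (Suc m) = (\<lambda>g. Phi m (Er m m g))" by (rule ext, simp)
  then show ?case using linop_comp[OF Suc linop_Er] by simp
qed

definition shcomm :: "((nat list \<Rightarrow> 'a::comm_ring_1) \<Rightarrow> nat list \<Rightarrow> 'a) \<Rightarrow> bool" where
  "shcomm T \<longleftrightarrow> (\<forall>k g. T (sh k g) = sh k (T g))"

lemma shcomm_sh: "shcomm (sh i)"
  unfolding shcomm_def using sh_comm by blast

lemma shcomm_comp: "shcomm S \<Longrightarrow> shcomm T \<Longrightarrow> shcomm (\<lambda>g. S (T g))"
  unfolding shcomm_def by simp

lemma shcomm_diff: "shcomm S \<Longrightarrow> shcomm T \<Longrightarrow> shcomm (\<lambda>g v. S g v - T g v)"
  unfolding shcomm_def by (simp add: linop_minus[OF linop_sh])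

lemma shcomm_Dp: "shcomm (Dp i j)"
  using shcomm_diff[OF shcomm_sh[of i] shcomm_sh[of j]] unfolding Dp_def[abs_def] by simp

lemma shcomm_Er: "shcomm (Er m k)"
proof (induction k)
  case 0 then show ?case by (simp add: shcomm_def)
next
  case (Suc k)
  have "Er m (Suc k) = (\<lambda>g. Dp k m (Er m k g))" by (rule ext, simp)
  then show ?case using shcomm_comp[OF shcomm_Dp Suc] by simp
qed

lemma shcomm_Phi: "shcomm (Phi m)"
proof (induction m)
  case 0 then show ?case by (simp add: shcomm_def)
next
  case (Suc m)
  have "Phi (Suc m) = (\<lambda>g. Phi m (Er m m g))" by (rule ext, simp)
  then show ?case using shcomm_comp[OF Suc shcomm_Er] by simp
qed

lemma Dp_comm: assumes "linop T" "shcomm T" shows "T (Dp i j g) = Dp i j (T g)"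
proof -
  have "T (Dp i j g) = T (\<lambda>v. sh i g v - sh j g v)" unfolding Dp_def[abs_def] by simp
  also have "\<dots> = (\<lambda>v. T (sh i g) v - T (sh j g) v)" by (rule linop_minus[OF assms(1)])
  also have "\<dots> = Dp i j (T g)" using assms(2) unfolding shcomm_def Dp_def[abs_def] by simp
  finally show ?thesis .
qed

lemma Er_factor: "i < k \<Longrightarrow> \<exists>G. Er m k g = Dp i m G"
proof (induction k)
  case 0 then show ?case by simp
next
  case (Suc k)
  show ?case
  proof (cases "i = k")
    case True then show ?thesis by auto
  next
    case False
    with Suc obtain G where G: "Er m k g = Dp i m G" by auto
    have "Er m (Suc k) g = Dp k m (Dp i m G)" using G by simp
    also have "\<dots> = Dp i m (Dp k m G)" by (rule Dp_comm[OF linop_Dp shcomm_Dp])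
    finally show ?thesis by blast
  qed
qed

lemma Phi_factor: "i < j \<Longrightarrow> j < m \<Longrightarrow> \<exists>G. Phi m g = Dp i j G"
proof (induction m arbitrary: g)
  case 0 then show ?case by simp
next
  case (Suc m)
  show ?case
  proof (cases "j < m")
    case True
    then obtain G where "Phi m (Er m m g) = Dp i j G" using Suc.IH[of "Er m m g"] Suc.prems by blast
    then show ?thesis by auto
  next
    case False
    then have j: "j = m" using Suc by simp
    obtain G where G: "Er m m g = Dp i j G" using Er_factor[of i m m g] Suc j by auto
    have "Phi (Suc m) g = Phi m (Dp i j G)" using G by simp
    also have "\<dots> = Dp i j (Phi m G)" by (rule Dp_comm[OF linop_Phi shcomm_Phi])
    finally show ?thesis by blast
  qed
qed

definition LS :: "nat \<Rightarrow> nat \<Rightarrow> (nat list \<Rightarrow> 'a::comm_ring_1) \<Rightarrow> nat list \<Rightarrow> 'a" where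
  "LS i j f v = (\<Sum>t\<le>v!i + v!j. f (v[i := t, j := v!i + v!j - t]))"

lemma LS_Dp: assumes ij: "i < j" "j < length v" shows "LS i j (Dp i j g) v = 0"
proof -
  define s where "s = v!i + v!j"
  define a where "a t = g (v[i := t, j := s - Suc t])" for t
  have ne: "i \<noteq> j" using ij by simp
  have li: "i < length v" using ij by simp
  have shi: "sh i g (v[i := t, j := s - t]) = (if 0 < t then a (t - 1) else 0)" for t
  proof (cases "0 < t")
    case True
    have "(v[i := t, j := s - t])[i := t - 1] = v[i := t - 1, j := s - t]"
      using ne li ij by (intro nth_equalityI) (auto simp: nth_list_update)
    moreover have "s - Suc (t - 1) = s - t" using True by simp
    ultimately show ?thesis using True ne li unfolding sh_def a_def by (simp add: nth_list_update)
  next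
    case False then show ?thesis using ne li unfolding sh_def by (simp add: nth_list_update)
  qed
  have shj: "sh j g (v[i := t, j := s - t]) = (if t < s then a t else 0)" for t
  proof (cases "t < s")
    case True
    have "(v[i := t, j := s - t])[j := s - t - 1] = v[i := t, j := s - Suc t]"
      by simp
    then show ?thesis using True ne ij unfolding sh_def a_def by (simp add: nth_list_update)
  next
    case False then show ?thesis using ne ij unfolding sh_def by (simp add: nth_list_update)
  qed
  have S1: "(\<Sum>t\<le>s. (if 0 < t then a (t - 1) else 0)) = (\<Sum>t<s. a t)"
  proof (cases s)
    case 0 then show ?thesis by simp
  next
    case (Suc s')
    have "(\<Sum>t\<le>s. (if 0 < t then a (t - 1) else 0)) = (\<Sum>t\<le>s'. a t)"
      unfolding Suc by (subst sum.atMost_Suc_shift, simp)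
    also have "\<dots> = (\<Sum>t<s. a t)" unfolding Suc lessThan_Suc_atMost ..
    finally show ?thesis .
  qed
  have S2: "(\<Sum>t\<le>s. (if t < s then a t else 0)) = (\<Sum>t<s. a t)"
    by (simp add: sum.If_cases Int_absorb1 lessThan_subset_iff atMost_def lessThan_def)
      (rule sum.cong, auto)
  have "LS i j (Dp i j g) v = (\<Sum>t\<le>s. sh i g (v[i := t, j := s - t]) - sh j g (v[i := t, j := s - t]))"
    unfolding LS_def Dp_def s_def ..
  also have "\<dots> = (\<Sum>t\<le>s. (if 0 < t then a (t - 1) else 0)) - (\<Sum>t\<le>s. (if t < s then a t else 0))"
    unfolding shi shj by (simp add: sum_subtractf)
  also have "\<dots> = 0" unfolding S1 S2 by simp
  finally show ?thesis .
qed

definition comps :: "nat \<Rightarrow> nat \<Rightarrow> nat list set" where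
  "comps m n = {v. length v = m \<and> sum_list v = n}"

definition Kp :: "nat \<Rightarrow> nat \<Rightarrow> (nat list \<Rightarrow> 'a::comm_ring_1) \<Rightarrow> bool" where
  "Kp m n f \<longleftrightarrow> (\<forall>v \<in> comps m n. \<forall>i j. i < j \<and> j < m \<longrightarrow> LS i j f v = 0)"

lemma Kp_Phi: "Kp m n (Phi m g)"
  unfolding Kp_def
proof (intro ballI allI impI)
  fix v i j assume v: "v \<in> comps m n" and ij: "i < j \<and> j < m"
  then obtain G where G: "Phi m g = Dp i j G" using Phi_factor by blast
  show "LS i j (Phi m g) v = 0" unfolding G by (rule LS_Dp, insert ij v, auto simp: comps_def)
qed

lemma Kp_zero_pair:
  assumes K: "Kp m n f" and v: "v \<in> comps m n" and ij: "i \<noteq> j" "i < m" "j < m"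
    and z: "v ! i = 0" "v ! j = 0"
  shows "f v = 0"
proof -
  have lv: "length v = m" using v by (simp add: comps_def)
  have "LS (min i j) (max i j) f v = 0" using K v ij unfolding Kp_def by (auto simp: min_def max_def)
  moreover have "v[min i j := 0, max i j := 0] = v"
  proof -
    have u1: "v[i := 0] = v" using list_update_id[of v i] z(1) by simp
    have u2: "v[j := 0] = v" using list_update_id[of v j] z(2) by simp
    show ?thesis by (cases "i \<le> j") (simp_all add: min_def max_def u1 u2)
  qed
  ultimately show ?thesis unfolding LS_def using z by (simp add: min_def max_def split: if_splits)
qed

definition lenresp :: "((nat list \<Rightarrow> 'a::comm_ring_1) \<Rightarrow> nat list \<Rightarrow> 'a) \<Rightarrow> bool" where
  "lenresp T \<longleftrightarrow> (\<forall>F G L. (\<forall>w. length w = L \<longrightarrow> F w = G w) \<longrightarrow> (\<forall>w. length w = L \<longrightarrow> T F w = T G w))"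

lemma lenrespD: "lenresp T \<Longrightarrow> (\<And>w. length w = length u \<Longrightarrow> F w = G w) \<Longrightarrow> T F u = T G u"
  unfolding lenresp_def by blast

lemma lenresp_sh: "lenresp (sh i)"
  unfolding lenresp_def sh_def by auto

lemma lenresp_comp: "lenresp S \<Longrightarrow> lenresp T \<Longrightarrow> lenresp (\<lambda>g. S (T g))"
  unfolding lenresp_def by blast

lemma lenresp_diff: "lenresp S \<Longrightarrow> lenresp T \<Longrightarrow> lenresp (\<lambda>g v. S g v - T g v)"
  unfolding lenresp_def by simp

lemma lenresp_Dp: "lenresp (Dp i j)"
  using lenresp_diff[OF lenresp_sh[of i] lenresp_sh[of j]] unfolding Dp_def[abs_def] by simp

lemma lenresp_Er: "lenresp (Er m k)"
proof (induction k)
  case 0 then show ?case by (simp add: lenresp_def)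
next
  case (Suc k)
  have "Er m (Suc k) = (\<lambda>g. Dp k m (Er m k g))" by (rule ext, simp)
  then show ?case using lenresp_comp[OF lenresp_Dp Suc] by simp
qed

lemma lenresp_Phi: "lenresp (Phi m)"
proof (induction m)
  case 0 then show ?case by (simp add: lenresp_def)
next
  case (Suc m)
  have "Phi (Suc m) = (\<lambda>g. Phi m (Er m m g))" by (rule ext, simp)
  then show ?case using lenresp_comp[OF Suc lenresp_Er] by simp
qed

definition Rp :: "nat \<Rightarrow> ((nat list \<Rightarrow> 'a::comm_ring_1) \<Rightarrow> nat list \<Rightarrow> 'a) \<Rightarrow> bool" where
  "Rp m T \<longleftrightarrow> (\<forall>g u. length u = m \<longrightarrow> T g (u @ [0]) = T (\<lambda>w. g (w @ [0])) u)"

lemma Rp_sh: "i < m \<Longrightarrow> Rp m (sh i)"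
  unfolding Rp_def sh_def by (auto simp: nth_append list_update_append)

lemma sh_last0: "length u = m \<Longrightarrow> sh m g (u @ [0]) = 0"
  unfolding sh_def by (simp add: nth_append)

lemma Rp_comp: "Rp m S \<Longrightarrow> Rp m T \<Longrightarrow> lenresp S \<Longrightarrow> Rp m (\<lambda>g. S (T g))"
  unfolding Rp_def
proof (intro allI impI)
  fix g :: "nat list \<Rightarrow> 'a" and u :: "nat list"
  assume S: "\<forall>g u. length u = m \<longrightarrow> S g (u @ [0]) = S (\<lambda>w. g (w @ [0])) u"
    and T: "\<forall>g u. length u = m \<longrightarrow> T g (u @ [0]) = T (\<lambda>w. g (w @ [0])) u"
    and L: "lenresp S" and u: "length u = m"
  have "S (T g) (u @ [0]) = S (\<lambda>w. T g (w @ [0])) u" using S u by blast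
  also have "\<dots> = S (T (\<lambda>w. g (w @ [0]))) u"
    by (rule lenrespD[OF L], insert T u, auto)
  finally show "S (T g) (u @ [0]) = S (T (\<lambda>w. g (w @ [0]))) u" .
qed

lemma Rp_diff: "Rp m S \<Longrightarrow> Rp m T \<Longrightarrow> Rp m (\<lambda>g v. S g v - T g v)"
  unfolding Rp_def by simp

lemma Rp_Dp: "i < m \<Longrightarrow> j < m \<Longrightarrow> Rp m (Dp i j)"
  using Rp_diff[OF Rp_sh[of i m] Rp_sh[of j m]] unfolding Dp_def[abs_def] by simp

lemma Rp_Er: "m' < m \<Longrightarrow> k \<le> m' \<Longrightarrow> Rp m (Er m' k)"
proof (induction k)
  case 0 then show ?case by (simp add: Rp_def)
next
  case (Suc k)
  have "Er m' (Suc k) = (\<lambda>g. Dp k m' (Er m' k g))" by (rule ext, simp)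
  then show ?case using Rp_comp[OF Rp_Dp Suc.IH lenresp_Dp] Suc.prems by simp
qed

lemma Rp_Phi: "m' \<le> m \<Longrightarrow> Rp m (Phi m')"
proof (induction m')
  case 0 then show ?case by (simp add: Rp_def)
next
  case (Suc m')
  have "Phi (Suc m') = (\<lambda>g. Phi m' (Er m' m' g))" by (rule ext, simp)
  then show ?case using Rp_comp[OF Suc.IH Rp_Er lenresp_Phi] Suc.prems by simp
qed

fun shs :: "nat \<Rightarrow> (nat list \<Rightarrow> 'a::comm_ring_1) \<Rightarrow> nat list \<Rightarrow> 'a" where
  "shs 0 X = X"
| "shs (Suc k) X = sh k (shs k X)"

lemma lenresp_shs: "lenresp (shs k)"
proof (induction k)
  case 0 then show ?case by (simp add: lenresp_def)
next
  case (Suc k)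
  have "shs (Suc k) = (\<lambda>g. sh k (shs k g))" by (rule ext, simp)
  then show ?case using lenresp_comp[OF lenresp_sh Suc] by simp
qed

lemma shs_comm: "shcomm T \<Longrightarrow> T (shs k X) = shs k (T X)"
  by (induction k) (auto simp: shcomm_def)

lemma Er_last0: "length u = m \<Longrightarrow> k \<le> m \<Longrightarrow> Er m k g (u @ [0]) = shs k (\<lambda>w. g (w @ [0])) u"
proof (induction k arbitrary: u)
  case 0 then show ?case by simp
next
  case (Suc k)
  have "Er m (Suc k) g (u @ [0]) = sh k (Er m k g) (u @ [0]) - sh m (Er m k g) (u @ [0])"
    by (simp add: Dp_def)
  also have "sh m (Er m k g) (u @ [0]) = 0" using sh_last0[of u m] Suc.prems by simp
  also have "sh k (Er m k g) (u @ [0]) = sh k (\<lambda>w. Er m k g (w @ [0])) u"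
    using Rp_sh[of k m] Suc.prems unfolding Rp_def by auto
  also have "\<dots> = sh k (shs k (\<lambda>w. g (w @ [0]))) u"
    by (rule lenrespD[OF lenresp_sh], insert Suc, auto)
  finally show ?case by simp
qed

lemma shs_Suc_point: "k \<le> length u \<Longrightarrow> shs k X (map Suc (take k u) @ drop k u) = X u"
proof (induction k)
  case 0 then show ?case by simp
next
  case (Suc k)
  define v where "v = map Suc (take (Suc k) u) @ drop (Suc k) u"
  have lv: "length v = length u" using Suc.prems by (simp add: v_def)
  have vk: "v ! k = Suc (u ! k)" using Suc.prems by (simp add: v_def nth_append)
  have upd: "v[k := v ! k - 1] = map Suc (take k u) @ drop k u"
    using Suc.prems by (intro nth_equalityI) (auto simp: v_def nth_append nth_list_update min_def)
  have "shs (Suc k) X v = shs k X (map Suc (take k u) @ drop k u)"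
    using Suc.prems lv vk upd by (simp add: sh_def)
  also have "\<dots> = X u" using Suc by simp
  finally show ?case unfolding v_def .
qed

lemma Phi_last0:
  assumes "length u = m"
  shows "Phi (Suc m) g (map Suc u @ [0]) = Phi m (\<lambda>w. g (w @ [0])) u"
proof -
  have "Phi (Suc m) g (map Suc u @ [0]) = Phi m (Er m m g) (map Suc u @ [0])" by simp
  also have "\<dots> = Phi m (\<lambda>w. Er m m g (w @ [0])) (map Suc u)"
  proof -
    have "length (map Suc u) = m" using assms by simp
    moreover have "\<forall>g u. length u = m \<longrightarrow> Phi m g (u @ [0]) = Phi m (\<lambda>w. g (w @ [0])) u"
      using Rp_Phi[of m m] unfolding Rp_def by simp
    ultimately show ?thesis by blast
  qed
  also have "\<dots> = Phi m (shs m (\<lambda>w. g (w @ [0]))) (map Suc u)"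
    by (rule lenrespD[OF lenresp_Phi], insert assms Er_last0, auto)
  also have "\<dots> = shs m (Phi m (\<lambda>w. g (w @ [0]))) (map Suc u)"
    by (simp add: shs_comm[OF shcomm_Phi])
  also have "\<dots> = Phi m (\<lambda>w. g (w @ [0])) u"
    using shs_Suc_point[of m u] assms by simp
  finally show ?thesis .
qed

lemma sum_list_upd: "i < length v \<Longrightarrow> sum_list (v[i := a]) + v ! i = sum_list v + (a::nat)"
proof (induction v arbitrary: i)
  case Nil then show ?case by simp
next
  case (Cons x v) then show ?case by (cases i) auto
qed

lemma sum_list_upd2:
  assumes "i < length v" "j < length v" "i \<noteq> j" "a + b = v ! i + v ! j"
  shows "sum_list (v[i := a, j := b]) = sum_list (v :: nat list)"
proof -
  have 1: "sum_list (v[i := a]) + v ! i = sum_list v + a" using sum_list_upd assms by blast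
  have 2: "sum_list (v[i := a, j := b]) + v[i := a] ! j = sum_list (v[i := a]) + b"
    using sum_list_upd[of j "v[i := a]" b] assms by simp
  have 3: "v[i := a] ! j = v ! j" using assms by simp
  show ?thesis using 1 2 3 assms(4) by linarith
qed

lemma sum_map_Suc: "sum_list (map Suc u) = sum_list u + length u"
  by (induction u) auto

lemma LS_diff: "LS i j (\<lambda>v. f v - g v) v = LS i j f v - LS i j g v"
  unfolding LS_def by (simp add: sum_subtractf)

lemma Kp_diff: "Kp m n f \<Longrightarrow> Kp m n g \<Longrightarrow> Kp m n (\<lambda>v. f v - g v)"
  unfolding Kp_def by (simp add: LS_diff)

lemma comps_upd2:
  assumes "v \<in> comps m n" "i < m" "j < m" "i \<noteq> j" "a + b = v ! i + v ! j"
  shows "v[i := a, j := b] \<in> comps m n"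
  using sum_list_upd2[of i v j a b] assms by (auto simp: comps_def)

lemma rho_Kp:
  assumes K: "Kp (Suc m) n f" and mn: "m \<le> n"
  shows "Kp m (n - m) (\<lambda>u. f (map Suc u @ [0]))"
  unfolding Kp_def
proof (intro ballI allI impI)
  fix u i j assume u: "u \<in> comps m (n - m)" and ij: "i < j \<and> j < m"
  have lu: "length u = m" and su: "sum_list u = n - m" using u by (auto simp: comps_def)
  define v where "v = map Suc u @ [0]"
  have v: "v \<in> comps (Suc m) n" using lu su mn by (simp add: v_def comps_def sum_map_Suc)
  have vi: "v ! i = Suc (u ! i)" "v ! j = Suc (u ! j)" "v ! m = 0"
    using ij lu by (auto simp: v_def nth_append)
  have lv: "length v = Suc m" using lu by (simp add: v_def)
  define s where "s = u ! i + u ! j"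
  define F where "F t = f (v[i := t, j := Suc (Suc s) - t])" for t
  have "LS i j f v = 0" using K v ij unfolding Kp_def by simp
  hence LSv: "(\<Sum>t\<le>Suc (Suc s). F t) = 0" unfolding LS_def F_def vi s_def by simp
  have F0: "F 0 = 0" unfolding F_def
    by (rule Kp_zero_pair[OF K _ _ _ _, of _ i m], rule comps_upd2[OF v],
        insert ij vi lu lv, auto simp: s_def nth_list_update)
  have FL: "F (Suc (Suc s)) = 0" unfolding F_def
    by (rule Kp_zero_pair[OF K _ _ _ _, of _ j m], rule comps_upd2[OF v],
        insert ij vi lu lv, auto simp: s_def nth_list_update)
  have "(\<Sum>t\<le>Suc (Suc s). F t) = F 0 + (\<Sum>t\<le>s. F (Suc t)) + F (Suc (Suc s))"
    by (subst sum.atMost_Suc_shift, simp add: sum.atMost_Suc)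
  hence S: "(\<Sum>t\<le>s. F (Suc t)) = 0" using LSv F0 FL by simp
  have pt: "F (Suc t) = f (map Suc (u[i := t, j := s - t]) @ [0])" if "t \<le> s" for t
  proof -
    have "v[i := Suc t, j := Suc (Suc s) - Suc t] = map Suc (u[i := t, j := s - t]) @ [0]"
      using that ij lu by (intro nth_equalityI) (auto simp: v_def nth_append nth_list_update Suc_diff_le)
    thus ?thesis unfolding F_def by simp
  qed
  show "LS i j (\<lambda>u. f (map Suc u @ [0])) u = 0"
    unfolding LS_def s_def[symmetric] using S pt by simp
qed

lemma shift_Kp:
  assumes K: "Kp (Suc m) (Suc n) g" and Z: "\<forall>v\<in>comps (Suc m) (Suc n). v ! m = 0 \<longrightarrow> g v = 0"
  shows "Kp (Suc m) n (\<lambda>v. g (v[m := Suc (v ! m)]))"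
  unfolding Kp_def
proof (intro ballI allI impI)
  fix v i j assume v: "v \<in> comps (Suc m) n" and ij: "i < j \<and> j < Suc m"
  have lv: "length v = Suc m" using v by (simp add: comps_def)
  define v' where "v' = v[m := Suc (v ! m)]"
  have v': "v' \<in> comps (Suc m) (Suc n)"
    using v sum_list_upd[of m v "Suc (v ! m)"] by (auto simp: comps_def v'_def)
  show "LS i j (\<lambda>v. g (v[m := Suc (v ! m)])) v = 0"
  proof (cases "j < m")
    case True
    have eq: "(v[i := t, j := x])[m := Suc (v[i := t, j := x] ! m)] = v'[i := t, j := x]" for t x
      using True ij lv by (intro nth_equalityI) (auto simp: v'_def nth_list_update)
    have vv: "v' ! i = v ! i" "v' ! j = v ! j" using True ij lv by (auto simp: v'_def)
    have "LS i j (\<lambda>v. g (v[m := Suc (v ! m)])) v = LS i j g v'"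
      unfolding LS_def eq vv ..
    also have "\<dots> = 0" using K v' ij True unfolding Kp_def by simp
    finally show ?thesis .
  next
    case False
    hence jm: "j = m" using ij by simp
    define s where "s = v ! i + v ! m"
    have im: "i < m" using ij jm by simp
    have eq1: "(v[i := t, m := s - t])[m := Suc (v[i := t, m := s - t] ! m)] = v[i := t, m := Suc (s - t)]" for t
      using lv im by (intro nth_equalityI) (auto simp: nth_list_update)
    have eq2: "v'[i := t, m := x] = v[i := t, m := x]" for t x
      using lv im by (intro nth_equalityI) (auto simp: v'_def nth_list_update)
    have vv: "v' ! i = v ! i" "v' ! m = Suc (v ! m)" using im lv by (auto simp: v'_def)
    have "LS i m g v' = 0" using K v' im unfolding Kp_def by simp
    hence L0: "(\<Sum>t\<le>Suc s. g (v[i := t, m := Suc s - t])) = 0"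
      unfolding LS_def vv eq2 s_def by simp
    have last: "g (v[i := Suc s, m := Suc s - Suc s]) = 0"
    proof -
      have "v[i := Suc s, m := 0] = v'[i := Suc s, m := 0]" using eq2 by simp
      moreover have "v'[i := Suc s, m := 0] \<in> comps (Suc m) (Suc n)"
        by (rule comps_upd2[OF v'], insert im vv lv, auto simp: s_def)
      ultimately show ?thesis using Z im lv by (simp add: v'_def)
    qed
    have "(\<Sum>t\<le>s. g (v[i := t, m := Suc s - t])) = 0"
      using L0 last by (simp add: sum.atMost_Suc)
    moreover have "(\<Sum>t\<le>s. g (v[i := t, m := Suc s - t])) = (\<Sum>t\<le>s. g (v[i := t, m := Suc (s - t)]))"
      by (rule sum.cong, auto simp: Suc_diff_le)
    ultimately show ?thesis unfolding jm LS_def s_def[symmetric] eq1 by simp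
  qed
qed

lemma choose2_Suc: "Suc m choose 2 = (m choose 2) + m"
  by (simp add: numeral_2_eq_2)

lemma step_common:
  fixes f :: "nat list \<Rightarrow> 'a::comm_ring_1"
  assumes IHm: "\<And>n (f :: nat list \<Rightarrow> 'a). Kp m n f \<Longrightarrow> \<exists>h. (\<forall>w. h w \<noteq> 0 \<longrightarrow> w \<in> comps m (n - (m choose 2)) \<and> m choose 2 \<le> n)
      \<and> (\<forall>v\<in>comps m n. f v = Phi m h v)"
    and K: "Kp (Suc m) n f"
  shows "\<exists>h'. (\<forall>w. h' w \<noteq> 0 \<longrightarrow> w \<in> comps (Suc m) (n - (Suc m choose 2)) \<and> Suc m choose 2 \<le> n)
      \<and> (\<forall>v\<in>comps (Suc m) n. v ! m = 0 \<longrightarrow> f v = Phi (Suc m) h' v)"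
proof -
  obtain h where hs: "\<forall>w. h w \<noteq> 0 \<longrightarrow> w \<in> comps m (n - m - (m choose 2)) \<and> (m choose 2) + m \<le> n"
     and hr: "\<forall>u\<in>comps m (n - m). m \<le> n \<longrightarrow> f (map Suc u @ [0]) = Phi m h u"
  proof (cases "m \<le> n")
    case True
    from IHm[OF rho_Kp[OF K True]] obtain h where
      h1: "\<forall>w. h w \<noteq> 0 \<longrightarrow> w \<in> comps m (n - m - (m choose 2)) \<and> m choose 2 \<le> n - m"
      and h2: "\<forall>v\<in>comps m (n - m). f (map Suc v @ [0]) = Phi m h v" by blast
    show ?thesis by (rule that[of h], insert h1 h2 True, auto)
  next
    case False then show ?thesis using that[of "\<lambda>_. 0"] by auto
  qed
  define h' where "h' w = (if w \<noteq> [] \<and> last w = 0 then h (butlast w) else 0)" for w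
  have Rh': "(\<lambda>w. h' (w @ [0])) = h" by (auto simp: h'_def)
  have supp: "w \<in> comps (Suc m) (n - (Suc m choose 2)) \<and> Suc m choose 2 \<le> n" if "h' w \<noteq> 0" for w
  proof -
    have w: "w \<noteq> []" "last w = 0" and hw: "h (butlast w) \<noteq> 0" using that by (auto simp: h'_def split: if_splits)
    have wb: "w = butlast w @ [0]" using w by (metis append_butlast_last_id)
    from hs hw have b: "butlast w \<in> comps m (n - m - (m choose 2))" and c: "(m choose 2) + m \<le> n" by auto
    have lb: "length (butlast w) = m" "sum_list (butlast w) = n - m - (m choose 2)" using b by (auto simp: comps_def)
    have "length w = Suc m" using lb w by (cases w) auto
    moreover have "sum_list w = sum_list (butlast w)"
    proof -
      have "sum_list w = sum_list (butlast w @ [0])" using wb by (rule arg_cong)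
      thus ?thesis by simp
    qed
    ultimately show ?thesis using lb c by (simp add: comps_def choose2_Suc diff_diff_left add.commute)
  qed
  have C1: "f v = Phi (Suc m) h' v" if v: "v \<in> comps (Suc m) n" and vm: "v ! m = 0" for v
  proof -
    have lv: "length v = Suc m" using v by (simp add: comps_def)
    show ?thesis
    proof (cases "\<exists>i<m. v ! i = 0")
      case True
      then obtain i where i: "i < m" "v ! i = 0" by blast
      have "f v = 0" by (rule Kp_zero_pair[OF K v, of i m], insert i vm, auto)
      moreover have "Phi (Suc m) h' v = 0" by (rule Kp_zero_pair[OF Kp_Phi v, of i m], insert i vm, auto)
      ultimately show ?thesis by simp
    next
      case False
      define u where "u = map (\<lambda>x. x - 1) (take m v)"
      have lu: "length u = m" using lv by (simp add: u_def)
      have vu: "v = map Suc u @ [0]"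
        using lv vm False by (intro nth_equalityI) (auto simp: u_def nth_append less_Suc_eq)
      have "sum_list v = sum_list u + m" using vu lu by (simp add: sum_map_Suc)
      hence mn: "m \<le> n" and u: "u \<in> comps m (n - m)" using v lu by (auto simp: comps_def)
      have "f v = Phi m h u" using hr u mn vu by simp
      also have "\<dots> = Phi m (\<lambda>w. h' (w @ [0])) u" unfolding Rh' ..
      also have "\<dots> = Phi (Suc m) h' v" unfolding vu by (rule Phi_last0[OF lu, symmetric])
      finally show ?thesis .
    qed
  qed
  show ?thesis using supp C1 by blast
qed

lemma K_image:
  fixes f :: "nat list \<Rightarrow> 'a::comm_ring_1"
  shows "Kp m n f \<Longrightarrow> \<exists>h. (\<forall>w. h w \<noteq> 0 \<longrightarrow> w \<in> comps m (n - (m choose 2)) \<and> m choose 2 \<le> n)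
      \<and> (\<forall>v\<in>comps m n. f v = Phi m h v)"
proof (induction m arbitrary: n f)
  case 0
  show ?case
    by (rule exI[of _ "\<lambda>w. if w = [] \<and> n = 0 then f w else 0"]) (auto simp: comps_def)
next
  case (Suc m)
  note IHm = Suc.IH
  have main: "Kp (Suc m) n f \<Longrightarrow> \<exists>h. (\<forall>w. h w \<noteq> 0 \<longrightarrow> w \<in> comps (Suc m) (n - (Suc m choose 2)) \<and> Suc m choose 2 \<le> n)
      \<and> (\<forall>v\<in>comps (Suc m) n. f v = Phi (Suc m) h v)" for n and f :: "nat list \<Rightarrow> 'a"
  proof (induction n arbitrary: f)
    case 0
    obtain h' where h'1: "\<forall>w. h' w \<noteq> 0 \<longrightarrow> w \<in> comps (Suc m) (0 - (Suc m choose 2)) \<and> Suc m choose 2 \<le> 0"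
      and h'2: "\<forall>v\<in>comps (Suc m) 0. v ! m = 0 \<longrightarrow> f v = Phi (Suc m) h' v"
      using step_common[OF IHm 0] by blast
    have "v ! m = 0" if "v \<in> comps (Suc m) 0" for v
    proof -
      have "sum_list v = 0" "length v = Suc m" using that by (auto simp: comps_def)
      hence "v ! m \<in> set v" by simp
      thus ?thesis using \<open>sum_list v = 0\<close> by (simp add: sum_list_eq_0_iff)
    qed
    thus ?case using h'1 h'2 by blast
  next
    case (Suc n)
    note IHn = Suc.IH
    obtain h' where h'1: "\<forall>w. h' w \<noteq> 0 \<longrightarrow> w \<in> comps (Suc m) (Suc n - (Suc m choose 2)) \<and> Suc m choose 2 \<le> Suc n"
      and h'2: "\<forall>v\<in>comps (Suc m) (Suc n). v ! m = 0 \<longrightarrow> f v = Phi (Suc m) h' v"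
      using step_common[OF IHm Suc.prems] by blast
    define g where "g v = f v - Phi (Suc m) h' v" for v
    have Kg: "Kp (Suc m) (Suc n) g" unfolding g_def by (rule Kp_diff[OF Suc.prems Kp_Phi])
    have Z: "\<forall>v\<in>comps (Suc m) (Suc n). v ! m = 0 \<longrightarrow> g v = 0" using h'2 by (simp add: g_def)
    from IHn[OF shift_Kp[OF Kg Z]] obtain h'' where
      h''1: "\<forall>w. h'' w \<noteq> 0 \<longrightarrow> w \<in> comps (Suc m) (n - (Suc m choose 2)) \<and> Suc m choose 2 \<le> n"
      and h''2: "\<forall>v\<in>comps (Suc m) n. g (v[m := Suc (v ! m)]) = Phi (Suc m) h'' v" by blast
    define H where "H w = h' w + sh m h'' w" for w
    have PH: "Phi (Suc m) H v = Phi (Suc m) h' v + sh m (Phi (Suc m) h'') v" for v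
    proof -
      have "Phi (Suc m) H = (\<lambda>v. Phi (Suc m) h' v + Phi (Suc m) (sh m h'') v)"
        unfolding H_def[abs_def] by (rule linop_add[OF linop_Phi])
      moreover have "Phi (Suc m) (sh m h'') = sh m (Phi (Suc m) h'')"
        using shcomm_Phi unfolding shcomm_def by blast
      ultimately show ?thesis by simp
    qed
    have gsh: "g v = sh m (Phi (Suc m) h'') v" if v: "v \<in> comps (Suc m) (Suc n)" for v
    proof -
      have lv: "length v = Suc m" using v by (simp add: comps_def)
      show ?thesis
      proof (cases "v ! m = 0")
        case True then show ?thesis using Z v by (simp add: sh_def)
      next
        case False
        define w where "w = v[m := v ! m - 1]"
        have w: "w \<in> comps (Suc m) n"
          using v lv False sum_list_upd[of m v "v ! m - 1"] by (auto simp: comps_def w_def)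
        have ww: "w[m := Suc (w ! m)] = v" using lv False by (simp add: w_def)
        have "sh m (Phi (Suc m) h'') v = Phi (Suc m) h'' w" using lv False by (simp add: sh_def w_def)
        also have "\<dots> = g (w[m := Suc (w ! m)])" using bspec[OF h''2 w] by simp
        also have "\<dots> = g v" unfolding ww ..
        finally show ?thesis by simp
      qed
    qed
    have suppH: "w \<in> comps (Suc m) (Suc n - (Suc m choose 2)) \<and> Suc m choose 2 \<le> Suc n" if "H w \<noteq> 0" for w
    proof (cases "h' w = 0")
      case False then show ?thesis using h'1 by blast
    next
      case True
      hence sw: "sh m h'' w \<noteq> 0" using that by (simp add: H_def)
      hence wm: "m < length w" "0 < w ! m" and hw: "h'' (w[m := w ! m - 1]) \<noteq> 0"
        by (auto simp: sh_def split: if_splits)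
      from h''1 hw have c: "w[m := w ! m - 1] \<in> comps (Suc m) (n - (Suc m choose 2))" and c2: "Suc m choose 2 \<le> n" by auto
      have "sum_list (w[m := w ! m - 1]) + w ! m = sum_list w + (w ! m - 1)" by (rule sum_list_upd[OF wm(1)])
      thus ?thesis using c c2 wm by (auto simp: comps_def)
    qed
    show ?case
    proof (rule exI[of _ H], intro conjI allI impI ballI)
      fix w assume "H w \<noteq> 0" thus "w \<in> comps (Suc m) (Suc n - (Suc m choose 2))" "Suc m choose 2 \<le> Suc n"
        using suppH by auto
    next
      fix v assume v: "v \<in> comps (Suc m) (Suc n)"
      have "f v = Phi (Suc m) h' v + g v" by (simp add: g_def)
      then show "f v = Phi (Suc m) H v" using gsh[OF v] PH[of v] by simp
    qed
  qed
  then show ?case using Suc.prems by blast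
qed

definition key :: "nat \<Rightarrow> nat list \<Rightarrow> nat" where
  "key L v = (\<Sum>k<L. v ! k * (L - k))"

lemma key_upd:
  assumes "i < length v"
  shows "key (length v) (v[i := x]) + v ! i * (length v - i) = key (length v) v + x * (length v - i)"
proof -
  let ?L = "length v"
  have fin: "finite {..<?L}" by simp
  have i: "i \<in> {..<?L}" using assms by simp
  have A: "key ?L (v[i := x]) = x * (?L - i) + (\<Sum>k\<in>{..<?L} - {i}. v[i := x] ! k * (?L - k))"
    unfolding key_def using sum.remove[OF fin i, of "\<lambda>k. v[i := x] ! k * (?L - k)"] assms by simp
  have B: "key ?L v = v ! i * (?L - i) + (\<Sum>k\<in>{..<?L} - {i}. v ! k * (?L - k))"
    unfolding key_def using sum.remove[OF fin i, of "\<lambda>k. v ! k * (?L - k)"] by simp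
  have C: "(\<Sum>k\<in>{..<?L} - {i}. v[i := x] ! k * (?L - k)) = (\<Sum>k\<in>{..<?L} - {i}. v ! k * (?L - k))"
    by (rule sum.cong, auto)
  show ?thesis using A B C by simp
qed

lemma key_dec:
  assumes "i < length v" "v ! i = Suc a"
  shows "key (length v) (v[i := a]) + (length v - i) = key (length v) v"
  using key_upd[OF assms(1), of a] assms(2) by simp

lemma key_inc:
  assumes "i < length v"
  shows "key (length v) (v[i := Suc (v ! i)]) = key (length v) v + (length v - i)"
  using key_upd[OF assms(1), of "Suc (v ! i)"] by simp

definition Inv :: "nat \<Rightarrow> (nat list \<Rightarrow> 'a::comm_ring_1) \<Rightarrow> nat list \<Rightarrow> bool" where
  "Inv L g w \<longleftrightarrow> length w = L \<and> g w \<noteq> 0 \<and> (\<forall>v. length v = L \<and> key L w < key L v \<longrightarrow> g v = 0)"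

lemma sh_zero_above:
  assumes I: "\<forall>v. length v = L \<and> K < key L v \<longrightarrow> g v = 0" and lv: "length v = L" and i: "i < L"
    and gt: "K + (L - i) < key L v"
  shows "sh i g v = 0"
proof (cases "0 < v ! i")
  case True
  then obtain a where a: "v ! i = Suc a" by (cases "v ! i") auto
  have "key L (v[i := a]) + (L - i) = key L v" using key_dec[of i v a] lv i a by simp
  hence "K < key L (v[i := a])" using gt by simp
  hence "g (v[i := a]) = 0" using I lv by simp
  thus ?thesis using a lv i by (simp add: sh_def)
qed (simp add: sh_def)

lemma Inv_Dp:
  assumes I: "Inv L g w" and ij: "i < j" "j < L"
  shows "Inv L (Dp i j g) (w[i := Suc (w ! i)])"
proof -
  define w' where "w' = w[i := Suc (w ! i)]"
  have lw: "length w = L" and gw: "g w \<noteq> 0" and up: "\<forall>v. length v = L \<and> key L w < key L v \<longrightarrow> g v = 0"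
    using I by (auto simp: Inv_def)
  have lw': "length w' = L" using lw by (simp add: w'_def)
  have kw': "key L w' = key L w + (L - i)" using key_inc[of i w] lw ij by (simp add: w'_def)
  have c: "L - j < L - i" using ij by simp
  have shi: "sh i g w' = g w"
  proof -
    have "w'[i := w' ! i - 1] = w" using lw ij by (simp add: w'_def)
    moreover have "0 < w' ! i" using lw ij by (simp add: w'_def)
    ultimately show ?thesis using lw' ij by (simp add: sh_def)
  qed
  have shj: "sh j g w' = 0"
    by (rule sh_zero_above[OF up lw'], insert ij kw' c, auto)
  have val: "Dp i j g w' \<noteq> 0" using shi shj gw by (simp add: Dp_def)
  have above: "Dp i j g v = 0" if "length v = L" "key L w' < key L v" for v
  proof -
    have "sh i g v = 0" by (rule sh_zero_above[OF up that(1)], insert ij that kw', auto)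
    moreover have "sh j g v = 0" by (rule sh_zero_above[OF up that(1)], insert ij that kw' c, auto)
    ultimately show ?thesis by (simp add: Dp_def)
  qed
  show ?thesis unfolding Inv_def w'_def[symmetric] using lw' val above by blast
qed

lemma Inv_Er: "Inv L g w \<Longrightarrow> k \<le> m \<Longrightarrow> m < L \<Longrightarrow> \<exists>w'. Inv L (Er m k g) w'"
proof (induction k)
  case 0 then show ?case by auto
next
  case (Suc k)
  then obtain w' where "Inv L (Er m k g) w'" by auto
  from Inv_Dp[OF this, of k m] Suc.prems show ?case by auto
qed

lemma Inv_Phi: "Inv L g w \<Longrightarrow> m \<le> L \<Longrightarrow> \<exists>w'. Inv L (Phi m g) w'"
proof (induction m arbitrary: g w)
  case 0 then show ?case by auto
next
  case (Suc m)
  obtain w' where "Inv L (Er m m g) w'" using Inv_Er[OF Suc.prems(1), of m m] Suc.prems by auto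
  from Suc.IH[OF this] Suc.prems show ?case by auto
qed

definition homog :: "nat \<Rightarrow> nat \<Rightarrow> (nat list \<Rightarrow> 'a::comm_ring_1) \<Rightarrow> bool" where
  "homog L s g \<longleftrightarrow> (\<forall>v. g v \<noteq> 0 \<longrightarrow> v \<in> comps L s)"

lemma homog_sh: assumes "homog L s g" shows "homog L (Suc s) (sh i g)"
  unfolding homog_def
proof (intro allI impI)
  fix v assume "sh i g v \<noteq> 0"
  hence i: "i < length v" "0 < v ! i" and gv: "g (v[i := v ! i - 1]) \<noteq> 0" by (auto simp: sh_def split: if_splits)
  have "v[i := v ! i - 1] \<in> comps L s" using assms gv unfolding homog_def by blast
  moreover have "sum_list (v[i := v ! i - 1]) + v ! i = sum_list v + (v ! i - 1)" by (rule sum_list_upd[OF i(1)])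
  ultimately show "v \<in> comps L (Suc s)" using i by (auto simp: comps_def)
qed

lemma homog_Dp: assumes "homog L s g" shows "homog L (Suc s) (Dp i j g)"
  unfolding homog_def
proof (intro allI impI)
  fix v assume "Dp i j g v \<noteq> 0"
  hence "sh i g v \<noteq> 0 \<or> sh j g v \<noteq> 0" by (auto simp: Dp_def)
  thus "v \<in> comps L (Suc s)" using homog_sh[OF assms, of i] homog_sh[OF assms, of j] unfolding homog_def by blast
qed

lemma homog_Er: "homog L s g \<Longrightarrow> homog L (s + k) (Er m k g)"
  by (induction k) (auto intro: homog_Dp)

lemma homog_Phi: "homog L s g \<Longrightarrow> homog L (s + (m choose 2)) (Phi m g)"
proof (induction m arbitrary: s g)
  case 0 then show ?case by (simp add: numeral_2_eq_2)
next
  case (Suc m)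
  have "homog L (s + m) (Er m m g)" by (rule homog_Er[OF Suc.prems])
  from Suc.IH[OF this] have "homog L (s + m + (m choose 2)) (Phi m (Er m m g))" .
  moreover have "s + m + (m choose 2) = s + (Suc m choose 2)" by (simp add: choose2_Suc)
  ultimately show ?case by simp
qed

lemma finite_comps: "finite (comps m n)"
proof -
  have "comps m n \<subseteq> {xs. set xs \<subseteq> {..n} \<and> length xs = m}"
    by (auto simp: comps_def member_le_sum_list)
  moreover have "finite {xs. set xs \<subseteq> {..n} \<and> length xs = m}"
    by (rule finite_lists_length_eq) simp
  ultimately show ?thesis by (rule finite_subset)
qed

lemma Phi_inj:
  fixes h :: "nat list \<Rightarrow> 'a::comm_ring_1"
  assumes supp: "\<forall>w. h w \<noteq> 0 \<longrightarrow> w \<in> comps m d"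
    and z: "\<forall>v\<in>comps m (d + (m choose 2)). Phi m h v = 0"
  shows "h w0 = 0"
proof (rule ccontr)
  assume h0: "h w0 \<noteq> 0"
  define S where "S = {w. h w \<noteq> 0}"
  have "S \<subseteq> comps m d" using supp unfolding S_def by blast
  hence finS: "finite S" using finite_comps[of m d] by (rule finite_subset)
  have neS: "S \<noteq> {}" using h0 unfolding S_def by auto
  define M where "M = Max (key m ` S)"
  have "M \<in> key m ` S" unfolding M_def using finS neS by (intro Max_in) auto
  then obtain w where wS: "w \<in> S" and kw: "key m w = M" by auto
  have mx: "key m v \<le> M" if "v \<in> S" for v unfolding M_def using finS that by (intro Max_ge) auto
  have "Inv m h w" unfolding Inv_def
  proof (intro conjI allI impI)
    show "length w = m" using wS supp by (auto simp: S_def comps_def)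
    show "h w \<noteq> 0" using wS by (simp add: S_def)
    fix v assume "length v = m \<and> key m w < key m v"
    thus "h v = 0" using mx[of v] kw by (auto simp: S_def)
  qed
  then obtain w' where I: "Inv m (Phi m h) w'" using Inv_Phi by blast
  hence nz: "Phi m h w' \<noteq> 0" by (simp add: Inv_def)
  have "homog m d h" using supp by (simp add: homog_def)
  hence "homog m (d + (m choose 2)) (Phi m h)" by (rule homog_Phi)
  hence "w' \<in> comps m (d + (m choose 2))" using nz by (simp add: homog_def)
  thus False using z nz by simp
qed

definition kap :: "nat \<Rightarrow> nat \<Rightarrow> nat list \<Rightarrow> nat list" where
  "kap i j u = u[i := 0, j := 0]"

lemma kap_eq_iff:
  assumes "length u = m" "length v = m" "i < m" "j < m"
  shows "kap i j u = kap i j v \<longleftrightarrow> (\<forall>k<m. k \<noteq> i \<and> k \<noteq> j \<longrightarrow> u ! k = v ! k)"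
proof
  assume "kap i j u = kap i j v"
  thus "\<forall>k<m. k \<noteq> i \<and> k \<noteq> j \<longrightarrow> u ! k = v ! k"
    unfolding kap_def by (metis nth_list_update_neq)
next
  assume "\<forall>k<m. k \<noteq> i \<and> k \<noteq> j \<longrightarrow> u ! k = v ! k"
  thus "kap i j u = kap i j v" unfolding kap_def using assms
    by (intro nth_equalityI) (auto simp: nth_list_update)
qed

lemma line_set:
  assumes v: "v \<in> comps m n" and ij: "i < j" "j < m"
  shows "(\<lambda>t. v[i := t, j := v ! i + v ! j - t]) ` {..v ! i + v ! j} = {u \<in> comps m n. kap i j u = kap i j v}"
proof -
  define s where "s = v ! i + v ! j"
  have lv: "length v = m" using v by (simp add: comps_def)
  show ?thesis unfolding s_def[symmetric]
  proof (intro equalityI subsetI)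
    fix u assume "u \<in> (\<lambda>t. v[i := t, j := s - t]) ` {..s}"
    then obtain t where t: "t \<le> s" and u: "u = v[i := t, j := s - t]" by auto
    have "u \<in> comps m n" unfolding u by (rule comps_upd2[OF v], insert ij t, auto simp: s_def)
    moreover have "kap i j u = kap i j v" unfolding u kap_def using lv ij
      by (intro nth_equalityI) (auto simp: nth_list_update)
    ultimately show "u \<in> {u \<in> comps m n. kap i j u = kap i j v}" by simp
  next
    fix u assume "u \<in> {u \<in> comps m n. kap i j u = kap i j v}"
    hence u: "u \<in> comps m n" and k: "kap i j u = kap i j v" by auto
    have lu: "length u = m" using u by (simp add: comps_def)
    have agree: "\<forall>k<m. k \<noteq> i \<and> k \<noteq> j \<longrightarrow> u ! k = v ! k" using kap_eq_iff[OF lu lv] ij k by auto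
    have "sum_list (kap i j u) + u ! i + u ! j = sum_list u"
    proof -
      have 1: "sum_list (u[i := 0]) + u ! i = sum_list u" using sum_list_upd[of i u 0] lu ij by simp
      have 2: "sum_list (u[i := 0, j := 0]) + u[i := 0] ! j = sum_list (u[i := 0])"
        using sum_list_upd[of j "u[i := 0]" 0] lu ij by simp
      show ?thesis using 1 2 ij by (simp add: kap_def)
    qed
    moreover have "sum_list (kap i j v) + v ! i + v ! j = sum_list v"
    proof -
      have 1: "sum_list (v[i := 0]) + v ! i = sum_list v" using sum_list_upd[of i v 0] lv ij by simp
      have 2: "sum_list (v[i := 0, j := 0]) + v[i := 0] ! j = sum_list (v[i := 0])"
        using sum_list_upd[of j "v[i := 0]" 0] lv ij by simp
      show ?thesis using 1 2 ij by (simp add: kap_def)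
    qed
    ultimately have sij: "u ! i + u ! j = s" using u v k by (simp add: comps_def s_def)
    have "u = v[i := u ! i, j := s - u ! i]"
      using lu lv ij agree sij by (intro nth_equalityI) (auto simp: nth_list_update)
    moreover have "u ! i \<le> s" using sij by simp
    ultimately show "u \<in> (\<lambda>t. v[i := t, j := s - t]) ` {..s}" by blast
  qed
qed

lemma LS_as_sum:
  assumes v: "v \<in> comps m n" and ij: "i < j" "j < m"
  shows "LS i j f v = (\<Sum>u\<in>comps m n. if kap i j u = kap i j v then f u else 0)"
proof -
  define s where "s = v ! i + v ! j"
  have lv: "length v = m" using v by (simp add: comps_def)
  have inj: "inj_on (\<lambda>t. v[i := t, j := s - t]) {..s}"
  proof (rule inj_onI)
    fix t t' assume "v[i := t, j := s - t] = v[i := t', j := s - t']"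
    hence "(v[i := t, j := s - t]) ! i = (v[i := t', j := s - t']) ! i" by simp
    thus "t = t'" using lv ij by simp
  qed
  have "LS i j f v = (\<Sum>t\<le>s. f (v[i := t, j := s - t]))" unfolding LS_def s_def ..
  also have "\<dots> = (\<Sum>u\<in>(\<lambda>t. v[i := t, j := s - t]) ` {..s}. f u)"
    by (rule sum.reindex[OF inj, symmetric, unfolded comp_def])
  also have "\<dots> = (\<Sum>u\<in>{u \<in> comps m n. kap i j u = kap i j v}. f u)"
    using line_set[OF v ij] unfolding s_def by simp
  also have "\<dots> = (\<Sum>u\<in>comps m n. if kap i j u = kap i j v then f u else 0)"
    by (rule sum.inter_filter[OF finite_comps])
  finally show ?thesis .
qed

definition Pairs :: "nat \<Rightarrow> (nat \<times> nat) set" where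
  "Pairs m = {(i, j). i < j \<and> j < m}"

lemma Pairs_Suc: "Pairs (Suc m) = Pairs m \<union> (\<lambda>i. (i, m)) ` {..<m}"
  unfolding Pairs_def by (auto simp: less_Suc_eq)

lemma finite_Pairs: "finite (Pairs m)"
  unfolding Pairs_def by (rule finite_subset[of _ "{..<m} \<times> {..<m}"]) auto

lemma card_Pairs: "card (Pairs m) = m choose 2"
proof (induction m)
  case 0 then show ?case by (simp add: Pairs_def)
next
  case (Suc m)
  have disj: "Pairs m \<inter> (\<lambda>i. (i, m)) ` {..<m} = {}" unfolding Pairs_def by auto
  have "card (Pairs (Suc m)) = card (Pairs m) + card ((\<lambda>i. (i, m)) ` {..<m})"
    unfolding Pairs_Suc by (rule card_Un_disjoint[OF finite_Pairs], auto simp: disj)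
  also have "card ((\<lambda>i. (i, m)) ` {..<m}) = m" by (subst card_image) (auto simp: inj_on_def)
  finally show ?case using Suc by (simp add: choose2_Suc)
qed

lemma diff_one_impossible:
  assumes u: "u \<in> comps m n" and v: "v \<in> comps m n" and k: "k < m"
    and agree: "\<forall>l<m. l \<noteq> k \<longrightarrow> u ! l = v ! l"
  shows "u ! k = v ! k"
proof -
  have lu: "length u = m" and lv: "length v = m" using u v by (auto simp: comps_def)
  have "u = v[k := u ! k]" using lu lv agree k by (intro nth_equalityI) (auto simp: nth_list_update)
  hence "sum_list u + v ! k = sum_list v + u ! k" using sum_list_upd[of k v "u ! k"] lv k by simp
  thus ?thesis using u v by (simp add: comps_def)
qed

lemma pair_count:
  assumes u: "u \<in> comps m n" and v: "v \<in> comps m n"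
  shows "card {p \<in> Pairs m. kap (fst p) (snd p) u = kap (fst p) (snd p) v}
    = (if u = v then m choose 2 else if SR_adj v u then 1 else 0)"
proof -
  have lu: "length u = m" and lv: "length v = m" using u v by (auto simp: comps_def)
  define D where "D = {k. k < m \<and> u ! k \<noteq> v ! k}"
  have finD: "finite D" unfolding D_def by simp
  have cond: "kap i j u = kap i j v \<longleftrightarrow> D \<subseteq> {i, j}" if "i < m" "j < m" for i j
    using kap_eq_iff[OF lu lv that] unfolding D_def by auto
  have S: "{p \<in> Pairs m. kap (fst p) (snd p) u = kap (fst p) (snd p) v} = {p \<in> Pairs m. D \<subseteq> {fst p, snd p}}"
    using cond unfolding Pairs_def by auto
  have adj: "SR_adj v u \<longleftrightarrow> card D = 2"
  proof -
    have "{i. i < length v \<and> v ! i \<noteq> u ! i} = D" unfolding D_def using lv by auto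
    thus ?thesis unfolding SR_adj_def by simp
  qed
  show ?thesis
  proof (cases "u = v")
    case True
    hence "D = {}" unfolding D_def by simp
    hence "{p \<in> Pairs m. D \<subseteq> {fst p, snd p}} = Pairs m" by auto
    thus ?thesis using True S card_Pairs by simp
  next
    case False
    have Dne: "D \<noteq> {}"
    proof
      assume "D = {}"
      hence "u = v" using lu lv unfolding D_def by (intro nth_equalityI) auto
      thus False using False by simp
    qed
    have D1: "card D \<noteq> 1"
    proof
      assume "card D = 1"
      then obtain k where Dk: "D = {k}" by (auto simp: card_Suc_eq)
      hence km: "k < m" and ne: "u ! k \<noteq> v ! k" unfolding D_def by auto
      have "\<forall>l<m. l \<noteq> k \<longrightarrow> u ! l = v ! l" using Dk unfolding D_def by auto
      thus False using diff_one_impossible[OF u v km] ne by simp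
    qed
    show ?thesis
    proof (cases "card D = 2")
      case True
      then obtain a b where ab: "D = {a, b}" "a < b" by (auto simp: card_2_iff) (metis insert_commute linorder_neqE_nat)
      have bm: "b < m" "a < m" using ab unfolding D_def by auto
      have "{p \<in> Pairs m. D \<subseteq> {fst p, snd p}} = {(a, b)}"
        using ab bm unfolding Pairs_def by auto
      thus ?thesis using S adj True False by simp
    next
      case c2: False
      have E: "{p \<in> Pairs m. D \<subseteq> {fst p, snd p}} = {}"
      proof (rule ccontr)
        assume "{p \<in> Pairs m. D \<subseteq> {fst p, snd p}} \<noteq> {}"
        then obtain i j where "D \<subseteq> {i, j}" by auto
        hence "card D \<le> card {i, j}" by (rule card_mono[rotated]) simp
        also have "\<dots> \<le> 2" by (simp add: card_insert_if)
        finally have "card D \<le> 2" .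
        moreover have "card D \<noteq> 0" using Dne finD by simp
        ultimately show False using D1 c2 by linarith
      qed
      show ?thesis unfolding S E using adj c2 False by simp
    qed
  qed
qed

lemma SR_adj_irrefl: "\<not> SR_adj v v"
  unfolding SR_adj_def by simp

lemma sum_LS:
  fixes f :: "nat list \<Rightarrow> 'a::comm_ring_1"
  assumes v: "v \<in> comps m n"
  shows "(\<Sum>p\<in>Pairs m. LS (fst p) (snd p) f v)
    = of_nat (m choose 2) * f v + (\<Sum>u\<in>comps m n. if SR_adj v u then f u else 0)"
proof -
  have "(\<Sum>p\<in>Pairs m. LS (fst p) (snd p) f v)
      = (\<Sum>p\<in>Pairs m. \<Sum>u\<in>comps m n. if kap (fst p) (snd p) u = kap (fst p) (snd p) v then f u else 0)"
    by (rule sum.cong, simp, rule LS_as_sum[OF v], auto simp: Pairs_def)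
  also have "\<dots> = (\<Sum>u\<in>comps m n. \<Sum>p\<in>Pairs m. if kap (fst p) (snd p) u = kap (fst p) (snd p) v then f u else 0)"
    by (rule sum.swap)
  also have "\<dots> = (\<Sum>u\<in>comps m n. of_nat (if u = v then m choose 2 else if SR_adj v u then 1 else 0) * f u)"
  proof (rule sum.cong[OF refl])
    fix u assume u: "u \<in> comps m n"
    have "(\<Sum>p\<in>Pairs m. if kap (fst p) (snd p) u = kap (fst p) (snd p) v then f u else 0)
        = of_nat (card {p \<in> Pairs m. kap (fst p) (snd p) u = kap (fst p) (snd p) v}) * f u"
      by (simp add: sum.If_cases finite_Pairs Int_def conj_commute)
    thus "(\<Sum>p\<in>Pairs m. if kap (fst p) (snd p) u = kap (fst p) (snd p) v then f u else 0)
        = of_nat (if u = v then m choose 2 else if SR_adj v u then 1 else 0) * f u"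
      unfolding pair_count[OF u v] .
  qed
  also have "\<dots> = (\<Sum>u\<in>comps m n. (if u = v then of_nat (m choose 2) * f u else 0) + (if SR_adj v u then f u else 0))"
    by (rule sum.cong[OF refl]) (auto simp: SR_adj_irrefl)
  also have "\<dots> = of_nat (m choose 2) * f v + (\<Sum>u\<in>comps m n. if SR_adj v u then f u else 0)"
    using v by (simp add: sum.distrib finite_comps)
  finally show ?thesis .
qed

lemma line_quad:
  fixes f :: "nat list \<Rightarrow> complex" and m n i j :: nat
  assumes ij: "i < j" "j < m"
  defines "F \<equiv> \<lambda>k. (\<Sum>u\<in>{u \<in> comps m n. kap i j u = k}. f u)"
  shows "(\<Sum>v\<in>comps m n. cnj (f v) * LS i j f v) = of_real (\<Sum>k\<in>kap i j ` comps m n. (cmod (F k))^2)"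
    and "\<And>v. v \<in> comps m n \<Longrightarrow> LS i j f v = F (kap i j v)"
proof -
  show LSF: "LS i j f v = F (kap i j v)" if v: "v \<in> comps m n" for v
    unfolding LS_as_sum[OF v ij] F_def by (rule sum.inter_filter[OF finite_comps, symmetric])
  have "(\<Sum>v\<in>comps m n. cnj (f v) * LS i j f v) = (\<Sum>v\<in>comps m n. cnj (f v) * F (kap i j v))"
    by (rule sum.cong[OF refl], simp add: LSF)
  also have "\<dots> = (\<Sum>k\<in>kap i j ` comps m n. \<Sum>v\<in>{v \<in> comps m n. kap i j v = k}. cnj (f v) * F (kap i j v))"
    by (rule sum.image_gen[OF finite_comps])
  also have "\<dots> = (\<Sum>k\<in>kap i j ` comps m n. cnj (F k) * F k)"
  proof (rule sum.cong[OF refl])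
    fix k
    have "(\<Sum>v\<in>{v \<in> comps m n. kap i j v = k}. cnj (f v) * F (kap i j v))
        = (\<Sum>v\<in>{v \<in> comps m n. kap i j v = k}. cnj (f v) * F k)" by (rule sum.cong) auto
    also have "\<dots> = cnj (F k) * F k" unfolding F_def by (simp add: sum_distrib_right cnj_sum)
    finally show "(\<Sum>v\<in>{v \<in> comps m n. kap i j v = k}. cnj (f v) * F (kap i j v)) = cnj (F k) * F k" .
  qed
  also have "\<dots> = (\<Sum>k\<in>kap i j ` comps m n. complex_of_real ((cmod (F k))^2))"
    by (intro sum.cong refl, subst complex_norm_square, simp add: mult.commute)
  also have "\<dots> = of_real (\<Sum>k\<in>kap i j ` comps m n. (cmod (F k))^2)" by (simp add: of_real_sum)
  finally show "(\<Sum>v\<in>comps m n. cnj (f v) * LS i j f v) = of_real (\<Sum>k\<in>kap i j ` comps m n. (cmod (F k))^2)" .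
qed

lemma pos_Kp:
  fixes f :: "nat list \<Rightarrow> complex"
  assumes Z: "\<forall>v\<in>comps m n. (\<Sum>p\<in>Pairs m. LS (fst p) (snd p) f v) = 0"
  shows "Kp m n f"
proof -
  define F where "F p k = (\<Sum>u\<in>{u \<in> comps m n. kap (fst p) (snd p) u = k}. f u)" for p k
  define R where "R p = (\<Sum>k\<in>kap (fst p) (snd p) ` comps m n. (cmod (F p k))^2)" for p
  have Q: "(\<Sum>v\<in>comps m n. cnj (f v) * LS (fst p) (snd p) f v) = of_real (R p)" if "p \<in> Pairs m" for p
    using line_quad(1)[where f=f and m=m and n=n and i="fst p" and j="snd p"] that unfolding R_def F_def Pairs_def by auto
  have "(\<Sum>p\<in>Pairs m. of_real (R p)) = (\<Sum>p\<in>Pairs m. \<Sum>v\<in>comps m n. cnj (f v) * LS (fst p) (snd p) f v)"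
    by (rule sum.cong[OF refl], simp add: Q)
  also have "\<dots> = (\<Sum>v\<in>comps m n. cnj (f v) * (\<Sum>p\<in>Pairs m. LS (fst p) (snd p) f v))"
    by (subst sum.swap, simp add: sum_distrib_left)
  also have "\<dots> = 0" using Z by simp
  finally have "complex_of_real (\<Sum>p\<in>Pairs m. R p) = 0" by (simp add: of_real_sum)
  hence R0: "(\<Sum>p\<in>Pairs m. R p) = 0" by (metis of_real_eq_0_iff)
  have Rnn: "\<And>p. p \<in> Pairs m \<Longrightarrow> 0 \<le> R p" unfolding R_def by (auto intro: sum_nonneg)
  have Rz: "R p = 0" if "p \<in> Pairs m" for p
    using sum_nonneg_eq_0_iff[OF finite_Pairs Rnn] R0 that by auto
  show ?thesis unfolding Kp_def
  proof (intro ballI allI impI)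
    fix v i j assume v: "v \<in> comps m n" and ij: "i < j \<and> j < m"
    have p: "(i, j) \<in> Pairs m" using ij by (simp add: Pairs_def)
    have fin: "finite (kap i j ` comps m n)" using finite_comps by simp
    have "\<forall>k\<in>kap i j ` comps m n. (cmod (F (i, j) k))^2 = 0"
      using sum_nonneg_eq_0_iff[OF fin, of "\<lambda>k. (cmod (F (i, j) k))^2"] Rz[OF p] unfolding R_def by simp
    hence "F (i, j) (kap i j v) = 0" using v by simp
    moreover have "LS i j f v = F (i, j) (kap i j v)"
      using line_quad(2)[where f=f and m=m and n=n and i=i and j=j and v=v] ij v unfolding F_def by simp
    ultimately show "LS i j f v = 0" by simp
  qed
qed

lemma comps_Suc_split:
  "comps (Suc m) d = (\<Union>a\<in>{..d}. (\<lambda>w. a # w) ` comps m (d - a))"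
proof (intro equalityI subsetI)
  fix v assume v: "v \<in> comps (Suc m) d"
  then obtain a w where vw: "v = a # w" by (cases v) (auto simp: comps_def)
  have "a \<le> d" "w \<in> comps m (d - a)" using v vw by (auto simp: comps_def)
  thus "v \<in> (\<Union>a\<in>{..d}. (\<lambda>w. a # w) ` comps m (d - a))" using vw by auto
next
  fix v assume "v \<in> (\<Union>a\<in>{..d}. (\<lambda>w. a # w) ` comps m (d - a))"
  thus "v \<in> comps (Suc m) d" by (auto simp: comps_def)
qed

lemma card_comps: "card (comps (Suc m) d) = (m + d) choose m"
proof (induction m arbitrary: d)
  case 0
  have "comps (Suc 0) d = {[d]}" by (auto simp: comps_def length_Suc_conv)
  thus ?case by simp
next
  case (Suc m)
  have "card (comps (Suc (Suc m)) d) = (\<Sum>a\<le>d. card ((\<lambda>w. a # w) ` comps (Suc m) (d - a)))"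
    unfolding comps_Suc_split[of "Suc m" d]
    by (rule card_UN_disjoint) (auto simp: finite_comps)
  also have "\<dots> = (\<Sum>a\<le>d. (m + (d - a)) choose m)"
    by (rule sum.cong[OF refl], subst card_image, auto simp: Suc.IH)
  also have "\<dots> = (\<Sum>j\<le>d. (m + j) choose m)"
  proof -
    have "(\<Sum>a\<le>d. (m + (d - a)) choose m) = (\<Sum>a=0..d. (m + (d - a)) choose m)" by (simp add: atMost_atLeast0)
    also have "\<dots> = (\<Sum>j=0..d. (m + (d + 0 - j - 0 + 0 - 0)) choose m)" by simp
    also have "\<dots> = (\<Sum>j=0..d. (m + j) choose m)"
      by (subst sum.atLeastAtMost_rev) (rule sum.cong, auto)
    finally show ?thesis by (simp add: atMost_atLeast0)
  qed
  also have "\<dots> = (Suc m + d) choose Suc m" by (subst choose_rising_sum(1)) simp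
  finally show ?case .
qed

lemma finite_SR: "finite (SR_vertices m n)"
  using finite_comps[of m n] by (simp add: SR_vertices_def comps_def)

lemma SR_vertices_comps: "SR_vertices m n = comps m n"
  by (simp add: SR_vertices_def comps_def)

lemma set_vlist: "set (SR_vlist m n) = comps m n"
  unfolding SR_vlist_def using finite_SR SR_vertices_comps by simp

lemma distinct_vlist: "distinct (SR_vlist m n)"
  unfolding SR_vlist_def by simp

lemma SR_adj_sym: "length u = length v \<Longrightarrow> SR_adj u v = SR_adj v u"
proof -
  assume l: "length u = length v"
  have "{i. i < length u \<and> u ! i \<noteq> v ! i} = {i. i < length v \<and> v ! i \<noteq> u ! i}" using l by auto
  thus ?thesis unfolding SR_adj_def by simp
qed

lemma A_carrier: "SR_adj_matrix m n \<in> carrier_mat (length (SR_vlist m n)) (length (SR_vlist m n))"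
  unfolding SR_adj_matrix_def Let_def by simp

lemma A_index: "a < length (SR_vlist m n) \<Longrightarrow> b < length (SR_vlist m n) \<Longrightarrow>
  SR_adj_matrix m n $$ (a, b) = (if SR_adj (SR_vlist m n ! a) (SR_vlist m n ! b) then 1 else 0)"
  unfolding SR_adj_matrix_def Let_def by simp

lemma A_sym: "a < length (SR_vlist m n) \<Longrightarrow> b < length (SR_vlist m n) \<Longrightarrow>
  SR_adj_matrix m n $$ (a, b) = SR_adj_matrix m n $$ (b, a)"
proof -
  assume a: "a < length (SR_vlist m n)" and b: "b < length (SR_vlist m n)"
  have "SR_vlist m n ! a \<in> comps m n" "SR_vlist m n ! b \<in> comps m n"
    using a b set_vlist[of m n] nth_mem by blast+
  hence "length (SR_vlist m n ! a) = length (SR_vlist m n ! b)" by (simp add: comps_def)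
  thus ?thesis using A_index[OF a b] A_index[OF b a] SR_adj_sym by simp
qed

definition fx :: "nat \<Rightarrow> nat \<Rightarrow> complex vec \<Rightarrow> nat list \<Rightarrow> complex" where
  "fx m n x w = (\<Sum>a<length (SR_vlist m n). if SR_vlist m n ! a = w then x $ a else 0)"

lemma fx_nth: assumes a: "a < length (SR_vlist m n)" shows "fx m n x (SR_vlist m n ! a) = x $ a"
proof -
  let ?vs = "SR_vlist m n"
  have "fx m n x (?vs ! a) = (\<Sum>a'<length ?vs. if a' = a then x $ a' else 0)"
    unfolding fx_def
    by (rule sum.cong[OF refl]) (use a distinct_vlist[of m n] in \<open>auto simp: nth_eq_iff_index_eq\<close>)
  also have "\<dots> = x $ a" using a by simp
  finally show ?thesis .
qed

definition Mc :: "nat \<Rightarrow> nat \<Rightarrow> complex mat" where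
  "Mc m n = char_matrix (map_mat complex_of_real (SR_adj_matrix m n)) (complex_of_real (- real (m choose 2)))"

lemma Mc_carrier: "Mc m n \<in> carrier_mat (length (SR_vlist m n)) (length (SR_vlist m n))"
  unfolding Mc_def using A_carrier by simp

lemma Mc_index: "a < length (SR_vlist m n) \<Longrightarrow> b < length (SR_vlist m n) \<Longrightarrow>
  Mc m n $$ (a, b) = (if SR_adj (SR_vlist m n ! a) (SR_vlist m n ! b) then 1 else 0)
    + (if a = b then of_nat (m choose 2) else 0)"
  unfolding Mc_def char_matrix_def using A_carrier[of m n] A_index[of a m n b] by auto

lemma Mc_mult:
  assumes x: "x \<in> carrier_vec (length (SR_vlist m n))" and a: "a < length (SR_vlist m n)"
  shows "(Mc m n *\<^sub>v x) $ a = (\<Sum>p\<in>Pairs m. LS (fst p) (snd p) (fx m n x) (SR_vlist m n ! a))"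
proof -
  let ?vs = "SR_vlist m n" let ?N = "length ?vs" let ?f = "fx m n x"
  have va: "?vs ! a \<in> comps m n" using a set_vlist[of m n] nth_mem by blast
  have "(Mc m n *\<^sub>v x) $ a = (\<Sum>b<?N. Mc m n $$ (a, b) * x $ b)"
    using Mc_carrier[of m n] x a by (simp add: scalar_prod_def atLeast0LessThan)
  also have "\<dots> = (\<Sum>b<?N. (if SR_adj (?vs ! a) (?vs ! b) then x $ b else 0) + (if a = b then of_nat (m choose 2) * x $ b else 0))"
    by (rule sum.cong[OF refl]) (simp add: Mc_index a distrib_right)
  also have "\<dots> = (\<Sum>b<?N. if SR_adj (?vs ! a) (?vs ! b) then ?f (?vs ! b) else 0) + of_nat (m choose 2) * ?f (?vs ! a)"
  proof -
    have "(\<Sum>b<?N. if SR_adj (?vs ! a) (?vs ! b) then x $ b else 0) = (\<Sum>b<?N. if SR_adj (?vs ! a) (?vs ! b) then ?f (?vs ! b) else 0)"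
      by (rule sum.cong[OF refl]) (simp add: fx_nth)
    thus ?thesis using a by (simp add: sum.distrib fx_nth)
  qed
  also have "(\<Sum>b<?N. if SR_adj (?vs ! a) (?vs ! b) then ?f (?vs ! b) else 0)
      = (\<Sum>u\<in>comps m n. if SR_adj (?vs ! a) u then ?f u else 0)"
    using sum.reindex_bij_betw[OF bij_betw_nth[OF distinct_vlist refl set_vlist[symmetric]],
        of "\<lambda>u. if SR_adj (?vs ! a) u then ?f u else 0"] by (simp add: lessThan_def)
  finally show ?thesis using sum_LS[OF va, of ?f] by simp
qed

lemma ker_iff:
  assumes x: "x \<in> carrier_vec (length (SR_vlist m n))"
  shows "Mc m n *\<^sub>v x = 0\<^sub>v (length (SR_vlist m n)) \<longleftrightarrow> Kp m n (fx m n x)"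
proof
  assume z: "Mc m n *\<^sub>v x = 0\<^sub>v (length (SR_vlist m n))"
  show "Kp m n (fx m n x)"
  proof (rule pos_Kp, intro ballI)
    fix v assume "v \<in> comps m n"
    then obtain a where a: "a < length (SR_vlist m n)" and va: "v = SR_vlist m n ! a"
      using set_vlist[of m n] by (metis in_set_conv_nth)
    have "(Mc m n *\<^sub>v x) $ a = 0" using z a by simp
    thus "(\<Sum>p\<in>Pairs m. LS (fst p) (snd p) (fx m n x) v) = 0" using Mc_mult[OF x a] va by simp
  qed
next
  assume K: "Kp m n (fx m n x)"
  show "Mc m n *\<^sub>v x = 0\<^sub>v (length (SR_vlist m n))"
  proof (rule eq_vecI)
    fix a assume "a < dim_vec (0\<^sub>v (length (SR_vlist m n)) :: complex vec)"
    hence a: "a < length (SR_vlist m n)" by simp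
    have va: "SR_vlist m n ! a \<in> comps m n" using a set_vlist[of m n] nth_mem by blast
    have "LS (fst p) (snd p) (fx m n x) (SR_vlist m n ! a) = 0" if "p \<in> Pairs m" for p
      using K va that unfolding Kp_def Pairs_def by auto
    thus "(Mc m n *\<^sub>v x) $ a = 0\<^sub>v (length (SR_vlist m n)) $ a" using Mc_mult[OF x a] a by simp
  qed (use Mc_carrier[of m n] in auto)
qed

lemma Kp_cong:
  assumes "\<forall>v\<in>comps m n. f v = g v" "Kp m n f" shows "Kp m n g"
  using assms unfolding Kp_def
  by (auto simp: LS_as_sum intro!: sum.cong) (smt (verit, ccfv_SIG) LS_as_sum sum.cong)

lemma vs_cover: "v \<in> comps m n \<Longrightarrow> \<exists>b<length (SR_vlist m n). v = SR_vlist m n ! b"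
  using set_vlist[of m n] by (metis in_set_conv_nth)

lemma Phi_lin_comb:
  fixes c :: "nat list \<Rightarrow> 'a::comm_ring_1"
  assumes "finite W'"
  shows "Phi m (\<lambda>u. \<Sum>w\<in>W'. c w * D w u) v = (\<Sum>w\<in>W'. c w * Phi m (D w) v)"
proof -
  have "Phi m (\<lambda>u. \<Sum>w\<in>W'. c w * D w u) = (\<lambda>v. \<Sum>w\<in>W'. Phi m (\<lambda>u. c w * D w u) v)"
    by (rule linop_sum[OF linop_Phi assms])
  moreover have "Phi m (\<lambda>u. c w * D w u) = (\<lambda>v. c w * Phi m (D w) v)" for w
    by (rule linop_scale[OF linop_Phi])
  ultimately show ?thesis by simp
qed

lemma kernel_dim_Mc:
  "kernel_dim (Mc m n) = card {w \<in> comps m (n - (m choose 2)). m choose 2 \<le> n}"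
proof -
  define vs where "vs = SR_vlist m n"
  define N where "N = length vs"
  define C where "C = m choose 2"
  define W where "W = {w \<in> comps m (n - C). C \<le> n}"
  define \<delta> :: "nat list \<Rightarrow> nat list \<Rightarrow> complex" where "\<delta> w u = (if u = w then 1 else 0)" for w u
  define bv where "bv w = vec N (\<lambda>a. Phi m (\<delta> w) (vs ! a))" for w
  have Mc: "Mc m n \<in> carrier_mat N N" using Mc_carrier unfolding N_def vs_def by blast
  interpret K: kernel N N "Mc m n" by (unfold_locales) (rule Mc)
  have finW: "finite W" unfolding W_def using finite_comps by simp
  have vsc: "\<exists>b<N. v = vs ! b" if "v \<in> comps m n" for v using vs_cover[OF that] unfolding N_def vs_def .
  have fx_vec: "fx m n x (vs ! b) = x $ b" if "b < N" for x b using fx_nth that unfolding N_def vs_def by blast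
  have bvc: "bv w \<in> carrier_vec N" for w by (simp add: bv_def)
  have fx_bv: "fx m n (bv w) v = Phi m (\<delta> w) v" if "v \<in> comps m n" for v w
    using vsc[OF that] fx_vec bv_def by auto
  have bvker: "bv w \<in> mat_kernel (Mc m n)" for w
  proof (rule mat_kernelI[OF Mc bvc])
    have "Kp m n (fx m n (bv w))" by (rule Kp_cong[OF _ Kp_Phi], insert fx_bv, auto)
    thus "Mc m n *\<^sub>v bv w = 0\<^sub>v N" using ker_iff[of "bv w" m n] bvc unfolding N_def vs_def by simp
  qed
  have lin: "(\<Sum>w\<in>W'. c w * bv w $ b) = Phi m (\<lambda>u. \<Sum>w\<in>W'. c w * \<delta> w u) (vs ! b)"
    if "finite W'" "b < N" for W' c b
    using Phi_lin_comb[OF that(1), of m c \<delta> "vs ! b"] that(2) by (simp add: bv_def)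
  have injPhi: "h u = 0" if "C \<le> n" "\<forall>w. h w \<noteq> 0 \<longrightarrow> w \<in> W" "\<forall>b<N. Phi m h (vs ! b) = 0" for h u
  proof (rule Phi_inj[of h m "n - C"])
    show "\<forall>w. h w \<noteq> 0 \<longrightarrow> w \<in> comps m (n - C)" using that(2) unfolding W_def by auto
    show "\<forall>v\<in>comps m (n - C + (m choose 2)). Phi m h v = 0"
      using that(1,3) vsc unfolding C_def by auto
  qed
  have inj: "inj_on bv W"
  proof (rule inj_onI)
    fix w w' assume w: "w \<in> W" and w': "w' \<in> W" and eq: "bv w = bv w'"
    have Cn: "C \<le> n" using w unfolding W_def by simp
    define h where "h u = \<delta> w u - \<delta> w' u" for u
    have "Phi m h (vs ! b) = 0" if "b < N" for b
    proof -
      have "Phi m h = (\<lambda>v. Phi m (\<delta> w) v - Phi m (\<delta> w') v)"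
        unfolding h_def by (rule linop_minus[OF linop_Phi])
      moreover have "bv w $ b = bv w' $ b" using eq by simp
      ultimately show ?thesis using that by (simp add: bv_def)
    qed
    moreover have "\<forall>u. h u \<noteq> 0 \<longrightarrow> u \<in> W" using w w' by (auto simp: h_def \<delta>_def)
    ultimately have "h w = 0" using injPhi[OF Cn] by blast
    thus "w = w'" by (auto simp: h_def \<delta>_def split: if_splits)
  qed
  define B where "B = bv ` W"
  have finB: "finite B" unfolding B_def using finW by simp
  have Bker: "B \<subseteq> mat_kernel (Mc m n)" unfolding B_def using bvker by auto
  have li: "\<not> K.Ker.lin_dep B"
  proof
    assume "K.Ker.lin_dep B"
    then obtain A a v where A: "finite A" "A \<subseteq> B" and lc: "K.lincomb a A = 0\<^sub>v N"
      and vA: "v \<in> A" and av: "a v \<noteq> 0"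
      unfolding K.Ker.lin_dep_def by auto
    define W' where "W' = {w \<in> W. bv w \<in> A}"
    have W'W: "W' \<subseteq> W" unfolding W'_def by auto
    have finW': "finite W'" using finW W'W by (rule finite_subset[rotated])
    have AW': "A = bv ` W'" using A(2) unfolding W'_def B_def by auto
    have injW': "inj_on bv W'" using inj W'W by (rule inj_on_subset)
    define h where "h u = (\<Sum>w\<in>W'. a (bv w) * \<delta> w u)" for u
    have hval: "h u = (if u \<in> W' then a (bv u) else 0)" for u
      unfolding h_def \<delta>_def using finW' by (simp add: sum.delta' if_distrib[of "\<lambda>x. _ * x"] cong: if_cong)
    have "Phi m h (vs ! b) = 0" if b: "b < N" for b
    proof -
      have "Phi m h (vs ! b) = (\<Sum>w\<in>W'. a (bv w) * bv w $ b)" unfolding h_def using lin[OF finW' b] by simp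
      also have "\<dots> = (\<Sum>y\<in>A. a y * y $ b)" unfolding AW' by (rule sum.reindex[OF injW', symmetric, unfolded comp_def])
      also have "\<dots> = K.lincomb a A $ b" using K.lincomb_index[OF b] A Bker by auto
      also have "\<dots> = 0" using lc b by simp
      finally show ?thesis .
    qed
    moreover have "\<forall>u. h u \<noteq> 0 \<longrightarrow> u \<in> W" using hval W'W by (auto split: if_splits)
    moreover obtain w0 where w0: "w0 \<in> W'" "v = bv w0" using vA AW' by auto
    moreover have "C \<le> n" using w0 W'W unfolding W_def by auto
    ultimately have "h w0 = 0" using injPhi by blast
    thus False using hval w0 av by simp
  qed
  have gen: "K.Ker.span B = mat_kernel (Mc m n)"
  proof (intro equalityI)
    show "K.Ker.span B \<subseteq> mat_kernel (Mc m n)" using K.Ker.span_is_subset2 Bker by simp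
  next
    show "mat_kernel (Mc m n) \<subseteq> K.Ker.span B"
    proof
      fix x assume x: "x \<in> mat_kernel (Mc m n)"
      have xc: "x \<in> carrier_vec N" and xz: "Mc m n *\<^sub>v x = 0\<^sub>v N" using mat_kernelD[OF Mc x] by auto
      have "Kp m n (fx m n x)" using ker_iff[of x m n] xc xz unfolding N_def vs_def by simp
      from K_image[OF this] obtain h where hs: "\<forall>w. h w \<noteq> 0 \<longrightarrow> w \<in> comps m (n - C) \<and> C \<le> n"
        and hf: "\<forall>v\<in>comps m n. fx m n x v = Phi m h v" unfolding C_def by blast
      have hW: "h w = 0" if "w \<notin> W" for w using hs that unfolding W_def by auto
      define a where "a y = h (the_inv_into W bv y)" for y
      have hsum: "(\<lambda>u. \<Sum>w\<in>W. h w * \<delta> w u) = h"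
      proof
        fix u show "(\<Sum>w\<in>W. h w * \<delta> w u) = h u"
          using finW hW[of u] by (simp add: \<delta>_def sum.delta' if_distrib[of "\<lambda>x. _ * x"] cong: if_cong)
      qed
      have "K.lincomb a B = x"
      proof (rule eq_vecI)
        have lcB: "K.lincomb a B \<in> mat_kernel (Mc m n)" using Bker K.Ker.lincomb_closed by auto
        show dimeq: "dim_vec (K.lincomb a B) = dim_vec x" using mat_kernelD[OF Mc lcB] xc by auto
        fix b assume "b < dim_vec x"
        hence b: "b < N" using xc by simp
        have "K.lincomb a B $ b = (\<Sum>y\<in>B. a y * y $ b)" using K.lincomb_index[OF b Bker] .
        also have "\<dots> = (\<Sum>w\<in>W. a (bv w) * bv w $ b)" unfolding B_def
          by (rule sum.reindex[OF inj, unfolded comp_def])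
        also have "\<dots> = (\<Sum>w\<in>W. h w * bv w $ b)"
          by (rule sum.cong[OF refl]) (simp add: a_def the_inv_into_f_f[OF inj])
        also have "\<dots> = Phi m h (vs ! b)" using lin[OF finW b, of h] hsum by simp
        also have "\<dots> = fx m n x (vs ! b)"
          using hf nth_mem[of b vs] b set_vlist[of m n] unfolding N_def vs_def by auto
        also have "\<dots> = x $ b" using fx_vec[OF b] .
        finally show "K.lincomb a B $ b = x $ b" .
      qed
      thus "x \<in> K.Ker.span B" unfolding K.Ker.span_def using finB by blast
    qed
  qed
  have "K.Ker.basis B" unfolding K.Ker.basis_def using li gen Bker by auto
  hence "K.Ker.dim = card B" using K.Ker.dim_basis[OF finB] by simp
  also have "\<dots> = card W" unfolding B_def using card_image[OF inj] .
  finally show ?thesis using K.kernel_dim unfolding W_def C_def by simp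
qed

theorem proposition3:
  fixes m n :: nat
  assumes "m \<ge> 1"
  shows "eig_mult (SR_adj_matrix m n) (- real (m choose 2)) =
    (if n < ((m - 1) choose 2) then 0 else (n - ((m - 1) choose 2)) choose (m - 1))"
proof -
  obtain m' where m: "m = Suc m'" using assms by (cases m) auto
  have "eig_mult (SR_adj_matrix m n) (- real (m choose 2))
      = kernel_dim (char_matrix (map_mat complex_of_real (SR_adj_matrix m n)) (complex_of_real (- real (m choose 2))))"
    unfolding eig_mult_def by (rule order_eq_kernel_dim[OF A_carrier A_sym])
  also have "\<dots> = kernel_dim (Mc m n)" unfolding Mc_def ..
  also have "\<dots> = card {w \<in> comps m (n - (m choose 2)). m choose 2 \<le> n}" by (rule kernel_dim_Mc)
  also have "\<dots> = (if n < ((m - 1) choose 2) then 0 else (n - ((m - 1) choose 2)) choose (m - 1))"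
  proof (cases "m choose 2 \<le> n")
    case True
    have "card {w \<in> comps m (n - (m choose 2)). m choose 2 \<le> n} = card (comps (Suc m') (n - (m choose 2)))"
      using True m by simp
    also have "\<dots> = (m' + (n - (m choose 2))) choose m'" by (rule card_comps)
    also have "m' + (n - (m choose 2)) = n - (m' choose 2)" using True m choose2_Suc[of m'] by simp
    finally show ?thesis using True m choose2_Suc[of m'] by auto
  next
    case False
    hence E: "{w \<in> comps m (n - (m choose 2)). m choose 2 \<le> n} = {}" by simp
    have "n - (m' choose 2) < m'"
    proof -
      have F: "\<not> (m' choose 2) + m' \<le> n" using False m choose2_Suc[of m'] by simp
      hence "0 < m'" by (cases m') (auto simp: numeral_2_eq_2)
      thus ?thesis using F by linarith
    qed
    hence "(n - ((m - 1) choose 2)) choose (m - 1) = 0" using m by simp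
    thus ?thesis unfolding E by simp
  qed
  finally show ?thesis .
qed

end
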